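(* Let $\Gamma\cup\{\varphi\}$ be a finite set of closed formulas over a basic predicate signature $\Theta$. If $\Gamma\models_{\mathbf{Tm}^*}\varphi$ then $\Gamma\models_{\mathcal T(\mathbf{Tm}^* )}\varphi$.
   Context: Syntax. A basic predicate signature $\Theta$ consists of a nonempty set of predicate symbols, each of arity $\geq1$, and a possibly empty set $C$ of constants (no function symbols, no equality). Terms are variables or constants; formulas: atomic $P\tau_1\ldots\tau_n$, and $\neg\varphi$, $\Box\varphi$, $\forall x\varphi$, $\varphi\to\psi$. $\exists x\varphi$ abbreviates $\neg\forall x\neg\varphi$. $\varphi[x/\tau]$ is substitution of free occurrences of $x$ by $\tau$. Variants $\varphi\sim\psi$: one is obtained from the other by adding/deleting void quantifiers or by renaming bound variables (keeping free variables in the same places). Semantics. Truth values $\{\mathsf T,\mathsf t,\mathsf f,\mathsf F\}$, designated $\{\mathsf T,\mathsf t\}$. $\tilde\neg$: $\mathsf T\mapsto\{\mathsf F\},\mathsf t\mapsto\{\mathsf f\},\mathsf f\mapsto\{\mathsf t\},\mathsf F\mapsto\{\mathsf T\}$. $a\tilde\to b$ (rows $a$, columns $b$ in order $\mathsf T,\mathsf t,\mathsf f,\mathsf F$): row $\mathsf T$: $\{\mathsf T\},\{\mathsf t\},\{\mathsf f\},\{\mathsf F\}$; row $\mathsf t$: $\{\mathsf T\},\{\mathsf T,\mathsf t\},\{\mathsf f\},\{\mathsf f\}$; row $\mathsf f$: $\{\mathsf T\},\{\mathsf T,\mathsf t\},\{\mathsf T,\mathsf t\},\{\mathsf t\}$;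 row $\mathsf F$: all $\{\mathsf T\}$. $\tilde\Box_1\mathsf T=\{\mathsf T,\mathsf t\}$, $\tilde\Box_1a=\{\mathsf f,\mathsf F\}$ for $a\ne\mathsf T$. $\tilde\forall^d_4(X)=\{\min X\}$ for nonempty $X$, order $\mathsf F<\mathsf f<\mathsf t<\mathsf T$. A structure $\mathfrak A=\langle U,\cdot^{\mathfrak A}\rangle$ over $\Theta$: $U\ne\emptyset$, $P^{\mathfrak A}:U^n\to\{\mathsf T,\mathsf t,\mathsf f,\mathsf F\}$, $c^{\mathfrak A}\in U$. $\Theta_U$ adds new constants $\bar a$ for $a\in U\setminus C^{\mathfrak A}$, interpreted by $a$ in $\mathfrak A_U$. A $\mathbf{Tm}^*$-valuation over $\mathfrak A$ is $v:Sen(\Theta_U)\to\{\mathsf T,\mathsf t,\mathsf f,\mathsf F\}$ with $v(Pc_1\ldots c_n)=P^{\mathfrak A}(c_1^{\mathfrak A_U},\ldots,c_n^{\mathfrak A_U})$, $v(\neg\varphi)\in\tilde\neg v(\varphi)$, $v(\Box\varphi)\in\tilde\Box_1v(\varphi)$, $v(\varphi\to\psi)\in v(\varphi)\tilde\to v(\psi)$, $v(\forall x\varphi)\in\tilde\forall^d_4(\{v(\varphi[x/c]):c\in C\cup\bar U\})$, and $v(\varphi)=v(\varphi')$ whenever $\varphi\sim\varphi'$. For formulas with free variables among $x_1,\dots,x_n$, $\Gamma\models_{\mathbf{Tm}^*}\varphi$ iff for every structure $\mathfrak A$ over $\Theta$ and every $\mathbf{Tm}^*$-valuation $v$ over it,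 if $v(\gamma[\vec x/\vec c])\in\{\mathsf T,\mathsf t\}$ for all $\gamma\in\Gamma$ and all $\vec c$ from $C\cup\bar U$, then $v(\varphi[\vec x/\vec c])\in\{\mathsf T,\mathsf t\}$ for all $\vec c$. Tableaux. Let $\bar C=\{c_1,c_2,\ldots\}$ be an infinite set of new constants, $\Theta(\bar C)$ the extended signature. A signed formula is $\mathsf L{:}\varphi$ with $\mathsf L\in\{\mathsf T,\mathsf t,\mathsf f,\mathsf F\}$, $\varphi$ closed over $\Theta(\bar C)$; $\varphi(c)$ means $\varphi[x/c]$. A tableau for a signed formula is a finite tree with that formula at the root, obtained by repeatedly applying a rule to a signed formula on a branch and extending that branch by the alternatives of the rule (separated by $\mid$; each alternative gives a new branch containing the listed signed formulas). Rules: $\mathsf T{:}\neg\varphi/\mathsf F{:}\varphi$; $\mathsf t{:}\neg\varphi/\mathsf f{:}\varphi$; $\mathsf f{:}\neg\varphi/\mathsf t{:}\varphi$; $\mathsf F{:}\neg\varphi/\mathsf T{:}\varphi$; $\mathsf T{:}\Box\varphi/\mathsf T{:}\varphi$; $\mathsf t{:}\Box\varphi/\mathsf T{:}\varphi$; $\mathsf f{:}\Box\varphi/\mathsf t{:}\varphi\mid\mathsf f{:}\varphi\mid\mathsf F{:}\varphi$; $\mathsf F{:}\Box\varphi/\mathsf t{:}\varphi\mid\mathsf f{:}\varphi\mid\mathsf F{:}\varphi$; $\mathsf T{:}(\varphi\to\psi)/\mathsf F{:}\varphi\mid\mathsf t{:}\varphi,\mathsf t{:}\psi\mid\mathsf f{:}\varphi,\mathsf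 t{:}\psi\mid\mathsf f{:}\varphi,\mathsf f{:}\psi\mid\mathsf T{:}\psi$; $\mathsf t{:}(\varphi\to\psi)/\mathsf T{:}\varphi,\mathsf t{:}\psi\mid\mathsf t{:}\varphi,\mathsf t{:}\psi\mid\mathsf f{:}\varphi,\mathsf t{:}\psi\mid\mathsf f{:}\varphi,\mathsf f{:}\psi$; $\mathsf f{:}(\varphi\to\psi)/\mathsf T{:}\varphi,\mathsf f{:}\psi\mid\mathsf t{:}\varphi,\mathsf f{:}\psi\mid\mathsf t{:}\varphi,\mathsf F{:}\psi$; $\mathsf F{:}(\varphi\to\psi)/\mathsf T{:}\varphi,\mathsf F{:}\psi$. Quantifier rules: $(\mathsf T\forall)$ $\mathsf T{:}\forall x\varphi/\mathsf T{:}\varphi(c)$, $c$ any constant, reusable with any constants; $(\mathsf F\forall)$ $\mathsf F{:}\forall x\varphi/\mathsf F{:}\varphi(c)$, $c$ a constant not yet on the branch, usable only once per branch; $(\mathsf t\forall)$ $\mathsf t{:}\forall x\varphi/\mathsf t{:}\varphi(c),\mathsf t{:}\varphi(c')\mid\mathsf t{:}\varphi(c),\mathsf T{:}\varphi(c')$, where $c$ is new on the branch and $c'\neq c$ arbitrary; it is reusable in the sense that afterwards each resulting branch may again be split into a branch with $\mathsf t{:}\varphi(c'')$ and a branch with $\mathsf T{:}\varphi(c''')$ for any $c'',c'''\neq c$; $(\mathsf f\forall)$ $\mathsf f{:}\forall x\varphi/\mathsf f{:}\varphi(c),\mathsf f{:}\varphi(c')\mid\mathsf f{:}\varphi(c),\mathsf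 T{:}\varphi(c')\mid\mathsf f{:}\varphi(c),\mathsf t{:}\varphi(c')$, $c$ new on the branch, $c'\neq c$; reusable in the sense that each resulting branch may be split again into three branches containing $\mathsf f{:}\varphi(c'')$, $\mathsf T{:}\varphi(c''')$, $\mathsf t{:}\varphi(c'''')$ respectively, for any constants different from $c$. A branch is closed if it contains $\mathsf L{:}\varphi$ and $\mathsf L'{:}\varphi'$ with $\varphi\sim\varphi'$ and $\mathsf L\ne\mathsf L'$; a tableau is closed if all its branches are closed. A closed formula $\varphi$ over $\Theta$ is provable, $\models_{\mathcal T(\mathbf{Tm}^* )}\varphi$, if for each $\mathsf L\in\{\mathsf F,\mathsf f\}$ there is a closed tableau starting from $\mathsf L{:}\varphi$. For $\Gamma=\{\gamma_1,\ldots,\gamma_n\}$, $\Gamma\models_{\mathcal T(\mathbf{Tm}^* )}\varphi$ means $\models_{\mathcal T(\mathbf{Tm}^* )}(\gamma_1\to(\gamma_2\to\cdots\to(\gamma_n\to\varphi)\cdots))$. *)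

theory Defs
  imports Main
begin

datatype 'k tm = Var nat | Cst 'k

datatype ('p, 'k) fm =
    Atom 'p "'k tm list"
  | Neg "('p, 'k) fm"
  | Box "('p, 'k) fm"
  | All nat "('p, 'k) fm"
  | Imp "('p, 'k) fm" "('p, 'k) fm"

primrec fv :: "('p, 'k) fm \<Rightarrow> nat set" where
  "fv (Atom p ts) = {x. Var x \<in> set ts}"
| "fv (Neg f) = fv f"
| "fv (Box f) = fv f"
| "fv (All x f) = fv f - {x}"
| "fv (Imp f g) = fv f \<union> fv g"

primrec const_set :: "('p, 'k) fm \<Rightarrow> 'k set" where
  "const_set (Atom p ts) = {k. Cst k \<in> set ts}"
| "const_set (Neg f) = const_set f"
| "const_set (Box f) = const_set f"
| "const_set (All x f) = const_set f"
| "const_set (Imp f g) = const_set f \<union> const_set g"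

primrec arity_ok :: "('p \<Rightarrow> nat) \<Rightarrow> ('p, 'k) fm \<Rightarrow> bool" where
  "arity_ok ar (Atom p ts) = (length ts = ar p)"
| "arity_ok ar (Neg f) = arity_ok ar f"
| "arity_ok ar (Box f) = arity_ok ar f"
| "arity_ok ar (All x f) = arity_ok ar f"
| "arity_ok ar (Imp f g) = (arity_ok ar f \<and> arity_ok ar g)"

definition wff :: "('p \<Rightarrow> nat) \<Rightarrow> 'k set \<Rightarrow> ('p, 'k) fm \<Rightarrow> bool" where
  "wff ar K f \<longleftrightarrow> arity_ok ar f \<and> const_set f \<subseteq> K"

definition sentence :: "('p \<Rightarrow> nat) \<Rightarrow> 'k set \<Rightarrow> ('p, 'k) fm \<Rightarrow> bool" where
  "sentence ar K f \<longleftrightarrow> wff ar K f \<and> fv f = {}"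

primrec inst :: "(nat \<Rightarrow> 'k tm) \<Rightarrow> ('p, 'k) fm \<Rightarrow> ('p, 'k) fm" where
  "inst s (Atom p ts) = Atom p (map (\<lambda>t. case t of Var x \<Rightarrow> s x | Cst k \<Rightarrow> Cst k) ts)"
| "inst s (Neg f) = Neg (inst s f)"
| "inst s (Box f) = Box (inst s f)"
| "inst s (All x f) = All x (inst (s(x := Var x)) f)"
| "inst s (Imp f g) = Imp (inst s f) (inst s g)"

definition subst :: "nat \<Rightarrow> 'k tm \<Rightarrow> ('p, 'k) fm \<Rightarrow> ('p, 'k) fm" where
  "subst x t f = inst (Var(x := t)) f"

text \<open>y is substitutable for x in f (no free occurrence of x lies in the scope of a
  quantifier binding y).\<close>
primrec free_for :: "nat \<Rightarrow> nat \<Rightarrow> ('p, 'k) fm \<Rightarrow> bool" where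
  "free_for y x (Atom p ts) = True"
| "free_for y x (Neg f) = free_for y x f"
| "free_for y x (Box f) = free_for y x f"
| "free_for y x (All z f) =
     (z = x \<or> ((z \<noteq> y \<or> x \<notin> fv f) \<and> free_for y x f))"
| "free_for y x (Imp f g) = (free_for y x f \<and> free_for y x g)"

inductive variant :: "('p, 'k) fm \<Rightarrow> ('p, 'k) fm \<Rightarrow> bool" where
  v_refl: "variant f f"
| v_sym: "variant f g \<Longrightarrow> variant g f"
| v_trans: "variant f g \<Longrightarrow> variant g h \<Longrightarrow> variant f h"
| v_Neg: "variant f g \<Longrightarrow> variant (Neg f) (Neg g)"
| v_Box: "variant f g \<Longrightarrow> variant (Box f) (Box g)"
| v_All: "variant f g \<Longrightarrow> variant (All x f) (All x g)"
| v_Imp: "variant f g \<Longrightarrow> variant f' g' \<Longrightarrow> variant (Imp f f') (Imp g g')"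
| v_void: "x \<notin> fv f \<Longrightarrow> variant (All x f) f"
| v_rename: "y \<notin> fv (All x f) \<Longrightarrow> free_for y x f \<Longrightarrow>
             variant (All x f) (All y (subst x (Var y) f))"

text \<open>TT = T, Tt = t, Ff = f, FF = F.\<close>
datatype tv = TT | Tt | Ff | FF

definition designated :: "tv set" where
  "designated = {TT, Tt}"

fun rank :: "tv \<Rightarrow> nat" where
  "rank FF = 0" | "rank Ff = 1" | "rank Tt = 2" | "rank TT = 3"

fun negT :: "tv \<Rightarrow> tv set" where
  "negT TT = {FF}" | "negT Tt = {Ff}" | "negT Ff = {Tt}" | "negT FF = {TT}"

fun impT :: "tv \<Rightarrow> tv \<Rightarrow> tv set" where
  "impT TT b = {b}"
| "impT Tt TT = {TT}" | "impT Tt Tt = {TT, Tt}" | "impT Tt Ff = {Ff}" | "impT Tt FF = {Ff}"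
| "impT Ff TT = {TT}" | "impT Ff Tt = {TT, Tt}" | "impT Ff Ff = {TT, Tt}" | "impT Ff FF = {Tt}"
| "impT FF b = {TT}"

fun boxT :: "tv \<Rightarrow> tv set" where
  "boxT TT = {TT, Tt}" | "boxT a = {Ff, FF}"

definition forallT :: "tv set \<Rightarrow> tv set" where
  "forallT X = {a \<in> X. \<forall>b\<in>X. rank a \<le> rank b}"

text \<open>A structure over the signature (arities ar, constants C): universe U, interpretation
  PI of predicates (only arguments from U matter), interpretation CI of constants.\<close>
definition is_structure :: "'c set \<Rightarrow> 'u set \<Rightarrow> ('c \<Rightarrow> 'u) \<Rightarrow> bool" where
  "is_structure C U CI \<longleftrightarrow> U \<noteq> {} \<and> CI ` C \<subseteq> U"

text \<open>Constants of Theta_U: the constants of C (Inl) plus new names (Inr a) for a in U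
  not denoted by a constant of C.\<close>
definition constsU :: "'c set \<Rightarrow> 'u set \<Rightarrow> ('c \<Rightarrow> 'u) \<Rightarrow> ('c + 'u) set" where
  "constsU C U CI = Inl ` C \<union> Inr ` (U - CI ` C)"

fun interpU :: "('c \<Rightarrow> 'u) \<Rightarrow> 'c + 'u \<Rightarrow> 'u" where
  "interpU CI (Inl c) = CI c"
| "interpU CI (Inr a) = a"

fun eval_tm :: "('c \<Rightarrow> 'u) \<Rightarrow> ('c + 'u) tm \<Rightarrow> 'u" where
  "eval_tm CI (Cst k) = interpU CI k"
| "eval_tm CI (Var x) = undefined"

definition is_valuation ::
  "('p \<Rightarrow> nat) \<Rightarrow> 'c set \<Rightarrow> 'u set \<Rightarrow> ('p \<Rightarrow> 'u list \<Rightarrow> tv) \<Rightarrow> ('c \<Rightarrow> 'u)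
   \<Rightarrow> (('p, 'c + 'u) fm \<Rightarrow> tv) \<Rightarrow> bool" where
  "is_valuation ar C U PI CI v \<longleftrightarrow>
    (let K = constsU C U CI; Sen = sentence ar K in
     (\<forall>p ts. Sen (Atom p ts) \<longrightarrow> v (Atom p ts) = PI p (map (eval_tm CI) ts)) \<and>
     (\<forall>f. Sen (Neg f) \<longrightarrow> v (Neg f) \<in> negT (v f)) \<and>
     (\<forall>f. Sen (Box f) \<longrightarrow> v (Box f) \<in> boxT (v f)) \<and>
     (\<forall>f g. Sen (Imp f g) \<longrightarrow> v (Imp f g) \<in> impT (v f) (v g)) \<and>
     (\<forall>x f. Sen (All x f) \<longrightarrow>
         v (All x f) \<in> forallT {v (subst x (Cst k) f) | k. k \<in> K}) \<and>
     (\<forall>f g. Sen f \<and> Sen g \<and> variant f g \<longrightarrow> v f = v g))"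

definition sem_conseq_in ::
  "('p \<Rightarrow> nat) \<Rightarrow> 'c set \<Rightarrow> ('p, 'c) fm set \<Rightarrow> ('p, 'c) fm \<Rightarrow> 'u itself \<Rightarrow> bool" where
  "sem_conseq_in ar C \<Gamma> \<phi> _ \<longleftrightarrow>
    (\<forall>(U :: 'u set) PI CI v.
       is_structure C U CI \<and> is_valuation ar C U PI CI v \<longrightarrow>
       (\<forall>\<gamma>\<in>\<Gamma>. \<forall>s. (\<forall>x. s x \<in> constsU C U CI) \<longrightarrow>
            v (inst (Cst \<circ> s) (map_fm id Inl \<gamma>)) \<in> designated) \<longrightarrow>
       (\<forall>s. (\<forall>x. s x \<in> constsU C U CI) \<longrightarrow>
            v (inst (Cst \<circ> s) (map_fm id Inl \<phi>)) \<in> designated))"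

definition tm_conseq :: "('p \<Rightarrow> nat) \<Rightarrow> 'c set \<Rightarrow> ('p, 'c) fm set \<Rightarrow> ('p, 'c) fm \<Rightarrow> bool" where
  "tm_conseq ar C \<Gamma> \<phi> \<longleftrightarrow> sem_conseq_in ar C \<Gamma> \<phi> TYPE('c + nat)"

text \<open>Formulas over Theta(C-bar): constants Inl c (c in C) and the new constants Inr n.\<close>
type_synonym ('p, 'c) sfm = "tv \<times> ('p, 'c + nat) fm"

fun tconst :: "'c set \<Rightarrow> 'c + nat \<Rightarrow> bool" where
  "tconst C (Inl c) = (c \<in> C)"
| "tconst C (Inr n) = True"

definition bconsts :: "('p, 'c) sfm set \<Rightarrow> ('c + nat) set" where
  "bconsts S = (\<Union>(L, f)\<in>S. const_set f)"

definition branch_closed :: "('p, 'c) sfm set \<Rightarrow> bool" where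
  "branch_closed S \<longleftrightarrow> (\<exists>L f L' g. (L, f) \<in> S \<and> (L', g) \<in> S \<and> variant f g \<and> L \<noteq> L')"

text \<open>Alternatives of the propositional / modal rules (empty list: no rule applies).\<close>
fun palts :: "tv \<Rightarrow> ('p, 'k) fm \<Rightarrow> (tv \<times> ('p, 'k) fm) set list" where
  "palts TT (Neg f) = [{(FF, f)}]"
| "palts Tt (Neg f) = [{(Ff, f)}]"
| "palts Ff (Neg f) = [{(Tt, f)}]"
| "palts FF (Neg f) = [{(TT, f)}]"
| "palts TT (Box f) = [{(TT, f)}]"
| "palts Tt (Box f) = [{(TT, f)}]"
| "palts Ff (Box f) = [{(Tt, f)}, {(Ff, f)}, {(FF, f)}]"
| "palts FF (Box f) = [{(Tt, f)}, {(Ff, f)}, {(FF, f)}]"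
| "palts TT (Imp f g) =
     [{(FF, f)}, {(Tt, f), (Tt, g)}, {(Ff, f), (Tt, g)}, {(Ff, f), (Ff, g)}, {(TT, g)}]"
| "palts Tt (Imp f g) =
     [{(TT, f), (Tt, g)}, {(Tt, f), (Tt, g)}, {(Ff, f), (Tt, g)}, {(Ff, f), (Ff, g)}]"
| "palts Ff (Imp f g) = [{(TT, f), (Ff, g)}, {(Tt, f), (Ff, g)}, {(Tt, f), (FF, g)}]"
| "palts FF (Imp f g) = [{(TT, f), (FF, g)}]"
| "palts L (Atom p ts) = []"
| "palts L (All x f) = []"

text \<open>\<open>closable C S W\<close>: there is a closed tableau extending the branch S.  W records, per
  branch, the new constant c used by the (already applied) F-forall, t-forall or
  f-forall rule for a given signed formula; this enforces that F-forall is used once per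
  branch and that the re-uses of t-forall / f-forall use constants different from c.\<close>
inductive closable :: "'c set \<Rightarrow> ('p, 'c) sfm set \<Rightarrow> (('p, 'c) sfm \<Rightarrow> ('c + nat) option) \<Rightarrow> bool"
  for C where
  cl_closed: "branch_closed S \<Longrightarrow> closable C S W"
| cl_prop: "(L, f) \<in> S \<Longrightarrow> palts L f \<noteq> [] \<Longrightarrow>
    (\<forall>A\<in>set (palts L f). closable C (S \<union> A) W) \<Longrightarrow> closable C S W"
| cl_TAll: "(TT, All x f) \<in> S \<Longrightarrow> tconst C c \<Longrightarrow>
    closable C (insert (TT, subst x (Cst c) f) S) W \<Longrightarrow> closable C S W"
| cl_FAll: "(FF, All x f) \<in> S \<Longrightarrow> W (FF, All x f) = None \<Longrightarrow>
    tconst C c \<Longrightarrow> c \<notin> bconsts S \<Longrightarrow>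
    closable C (insert (FF, subst x (Cst c) f) S) (W((FF, All x f) := Some c)) \<Longrightarrow>
    closable C S W"
| cl_tAll: "(Tt, All x f) \<in> S \<Longrightarrow> W (Tt, All x f) = None \<Longrightarrow>
    tconst C c \<Longrightarrow> c \<notin> bconsts S \<Longrightarrow> tconst C c' \<Longrightarrow> c' \<noteq> c \<Longrightarrow>
    closable C (S \<union> {(Tt, subst x (Cst c) f), (Tt, subst x (Cst c') f)})
      (W((Tt, All x f) := Some c)) \<Longrightarrow>
    closable C (S \<union> {(Tt, subst x (Cst c) f), (TT, subst x (Cst c') f)})
      (W((Tt, All x f) := Some c)) \<Longrightarrow>
    closable C S W"
| cl_tAll_re: "(Tt, All x f) \<in> S \<Longrightarrow> W (Tt, All x f) = Some c \<Longrightarrow>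
    tconst C c' \<Longrightarrow> c' \<noteq> c \<Longrightarrow>
    closable C (insert (Tt, subst x (Cst c') f) S) W \<Longrightarrow>
    closable C (insert (TT, subst x (Cst c') f) S) W \<Longrightarrow>
    closable C S W"
| cl_fAll: "(Ff, All x f) \<in> S \<Longrightarrow> W (Ff, All x f) = None \<Longrightarrow>
    tconst C c \<Longrightarrow> c \<notin> bconsts S \<Longrightarrow> tconst C c' \<Longrightarrow> c' \<noteq> c \<Longrightarrow>
    closable C (S \<union> {(Ff, subst x (Cst c) f), (Ff, subst x (Cst c') f)})
      (W((Ff, All x f) := Some c)) \<Longrightarrow>
    closable C (S \<union> {(Ff, subst x (Cst c) f), (TT, subst x (Cst c') f)})
      (W((Ff, All x f) := Some c)) \<Longrightarrow>
    closable C (S \<union> {(Ff, subst x (Cst c) f), (Tt, subst x (Cst c') f)})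
      (W((Ff, All x f) := Some c)) \<Longrightarrow>
    closable C S W"
| cl_fAll_re: "(Ff, All x f) \<in> S \<Longrightarrow> W (Ff, All x f) = Some c \<Longrightarrow>
    tconst C c' \<Longrightarrow> c' \<noteq> c \<Longrightarrow>
    closable C (insert (Ff, subst x (Cst c') f) S) W \<Longrightarrow>
    closable C (insert (TT, subst x (Cst c') f) S) W \<Longrightarrow>
    closable C (insert (Tt, subst x (Cst c') f) S) W \<Longrightarrow>
    closable C S W"

definition tab_provable :: "'c set \<Rightarrow> ('p, 'c) fm \<Rightarrow> bool" where
  "tab_provable C \<phi> \<longleftrightarrow>
    (\<forall>L\<in>{FF, Ff}. closable C {(L, map_fm id Inl \<phi>)} (\<lambda>_. None))"

definition tab_conseq :: "'c set \<Rightarrow> ('p, 'c) fm list \<Rightarrow> ('p, 'c) fm \<Rightarrow> bool" where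
  "tab_conseq C gs \<phi> \<longleftrightarrow> tab_provable C (foldr Imp gs \<phi>)"

end

theory Submission
  imports Defs "HOL-Library.Countable_Set"
begin

definition tsub :: "(nat \<Rightarrow> 'k tm) \<Rightarrow> 'k tm \<Rightarrow> 'k tm" where
  "tsub s t = (case t of Var x \<Rightarrow> s x | Cst k \<Rightarrow> Cst k)"

lemma tsub_simps[simp]: "tsub s (Var x) = s x" "tsub s (Cst k) = Cst k"
  by (simp_all add: tsub_def)

lemma inst_Atom[simp]: "inst s (Atom p ts) = Atom p (map (tsub s) ts)"
  by (simp add: tsub_def)

declare inst.simps(1)[simp del]

definition sc :: "(nat \<Rightarrow> 'k tm) \<Rightarrow> bool" where
  "sc s \<longleftrightarrow> (\<forall>z. s z = Var z \<or> (\<exists>k. s z = Cst k))"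

lemma sc_upd: "sc s \<Longrightarrow> sc (s(x := Var x))"
  by (auto simp: sc_def)

lemma sc_Var: "sc Var" by (simp add: sc_def)

lemma sc_cst: "sc (Var(x := Cst k))" by (auto simp: sc_def)

lemma sc_cst2: "sc (Cst \<circ> e)" by (auto simp: sc_def)

lemma sc_cst3: "sc ((Cst \<circ> e)(x := Var x))" by (auto simp: sc_def)

lemma inst_cong: "(\<forall>z\<in>fv f. s z = s' z) \<Longrightarrow> inst s f = inst s' f"
proof (induction f arbitrary: s s')
  case (Atom p ts)
  have "\<forall>t\<in>set ts. tsub s t = tsub s' t"
  proof
    fix t assume "t \<in> set ts"
    then show "tsub s t = tsub s' t" using Atom by (cases t rule: tm.exhaust) auto
  qed
  then show ?case by simp
next
  case (All x f)
  have "inst (s(x:=Var x)) f = inst (s'(x:=Var x)) f" using All.prems by (intro All.IH) auto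
  then show ?case by simp
qed auto

lemma inst_Var: "inst Var f = f"
proof (induction f)
  case (Atom p ts)
  have "\<forall>t\<in>set ts. tsub Var t = t"
  proof
    fix t assume "t \<in> set ts"
    then show "tsub Var t = t" by (cases t rule: tm.exhaust) auto
  qed
  then show ?case by (simp add: map_idI)
qed auto

lemma inst_closed: "fv f = {} \<Longrightarrow> inst s f = f"
  using inst_cong[of f s Var] inst_Var by auto

fun tvars :: "'k tm \<Rightarrow> nat set" where
  "tvars (Var y) = {y}" | "tvars (Cst k) = {}"

lemma fv_inst: "fv (inst s f) \<subseteq> (\<Union>z\<in>fv f. tvars (s z))"
proof (induction f arbitrary: s)
  case (Atom p ts)
  show ?case
  proof
    fix x assume "x \<in> fv (inst s (Atom p ts))"
    then obtain t where t: "t \<in> set ts" "tsub s t = Var x" by auto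
    show "x \<in> (\<Union>z\<in>fv (Atom p ts). tvars (s z))"
    proof (cases t rule: tm.exhaust)
      case (Var z)
      then have "z \<in> fv (Atom p ts)" "x \<in> tvars (s z)" using t by auto
      then show ?thesis by blast
    next
      case (Cst k)
      then show ?thesis using t by simp
    qed
  qed
next
  case (All x f)
  show ?case
  proof
    fix y assume "y \<in> fv (inst s (All x f))"
    then have y: "y \<in> fv (inst (s(x := Var x)) f)" "y \<noteq> x" by auto
    then obtain z where z: "z \<in> fv f" "y \<in> tvars ((s(x := Var x)) z)" using All.IH by blast
    then have "z \<noteq> x" using y by auto
    then show "y \<in> (\<Union>z\<in>fv (All x f). tvars (s z))" using z by auto
  qed
next
  case (Imp f g)
  have a: "fv (inst s f) \<subseteq> (\<Union>z\<in>fv f. tvars (s z))" by (rule Imp.IH)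
  have b: "fv (inst s g) \<subseteq> (\<Union>z\<in>fv g. tvars (s z))" by (rule Imp.IH)
  show ?case using a b by (simp only: inst.simps fv.simps UN_Un) blast
qed simp_all

lemma fv_inst_sc: "sc s \<Longrightarrow> fv (inst s f) \<subseteq> fv f"
proof -
  assume "sc s"
  then have "\<forall>z. tvars (s z) \<subseteq> {z}" unfolding sc_def by (metis empty_subsetI order_refl tvars.simps)
  then show ?thesis using fv_inst[of s f] by blast
qed

lemma fv_inst_closed: "(\<forall>z\<in>fv f. \<exists>k. s z = Cst k) \<Longrightarrow> fv (inst s f) = {}"
  using fv_inst[of s f] by fastforce

primrec safe :: "(nat \<Rightarrow> 'k tm) \<Rightarrow> ('p, 'k) fm \<Rightarrow> bool" where
  "safe s (Atom p ts) = True"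
| "safe s (Neg f) = safe s f"
| "safe s (Box f) = safe s f"
| "safe s (All x f) = ((\<forall>z\<in>fv f - {x}. s z \<noteq> Var x) \<and> safe (s(x := Var x)) f)"
| "safe s (Imp f g) = (safe s f \<and> safe s g)"

lemma safe_sc: "sc s \<Longrightarrow> safe s f"
proof (induction f arbitrary: s)
  case (All x f)
  have a: "\<forall>z\<in>fv f - {x}. s z \<noteq> Var x"
  proof
    fix z assume "z \<in> fv f - {x}"
    then show "s z \<noteq> Var x" using All.prems unfolding sc_def by (metis DiffD2 insertI1 tm.distinct(1) tm.inject(1))
  qed
  have "safe (s(x := Var x)) f" using All.IH sc_upd[OF All.prems] .
  then show ?case using a by simp
qed auto

lemma safe_rename: "free_for y x f \<Longrightarrow> safe (Var(x := Var y)) f"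
proof (induction f)
  case (All w g)
  show ?case
  proof (cases "w = x")
    case True
    then have eq: "(Var(x := Var y))(w := Var w) = Var" by auto
    have "safe ((Var(x := Var y))(w := Var w)) g" unfolding eq by (rule safe_sc[OF sc_Var])
    moreover have "\<forall>z\<in>fv g - {w}. (Var(x := Var y)) z \<noteq> Var w" using True by auto
    ultimately show ?thesis by (simp only: safe.simps)
  next
    case False
    then have ff: "(w \<noteq> y \<or> x \<notin> fv g) \<and> free_for y x g" using All.prems by auto
    have upd: "(Var(x := Var y))(w := Var w) = Var(x := Var y)" using False by auto
    have "\<forall>z\<in>fv g - {w}. (Var(x := Var y)) z \<noteq> Var w" using ff False by auto
    moreover have "safe ((Var(x := Var y))(w := Var w)) g" unfolding upd using All.IH ff by blast
    ultimately show ?thesis by (simp only: safe.simps)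
  qed
qed auto

lemma inst_comp: "safe s f \<Longrightarrow> inst a (inst s f) = inst (\<lambda>z. tsub a (s z)) f"
proof (induction f arbitrary: s a)
  case (Atom p ts)
  have "\<forall>t\<in>set ts. tsub a (tsub s t) = tsub (\<lambda>z. tsub a (s z)) t"
  proof
    fix t show "tsub a (tsub s t) = tsub (\<lambda>z. tsub a (s z)) t" by (cases t rule: tm.exhaust) auto
  qed
  then show ?case by simp
next
  case (All x f)
  then have sf: "safe (s(x := Var x)) f" and nc: "\<forall>z\<in>fv f - {x}. s z \<noteq> Var x" by auto
  have "inst (a(x := Var x)) (inst (s(x := Var x)) f) = inst (\<lambda>z. tsub (a(x := Var x)) ((s(x := Var x)) z)) f"
    using All.IH[OF sf] .
  also have "\<dots> = inst ((\<lambda>z. tsub a (s z))(x := Var x)) f"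
  proof (rule inst_cong, rule ballI)
    fix z assume z: "z \<in> fv f"
    show "tsub (a(x := Var x)) ((s(x := Var x)) z) = ((\<lambda>z. tsub a (s z))(x := Var x)) z"
    proof (cases "z = x")
      case False
      then have "s z \<noteq> Var x" using nc z by auto
      then show ?thesis using False by (cases "s z" rule: tm.exhaust) auto
    qed simp
  qed
  finally show ?case by simp
qed auto

lemma free_for_inst: "free_for y x f \<Longrightarrow> sc s \<Longrightarrow> free_for y x (inst s f)"
proof (induction f arbitrary: s)
  case (All z g)
  show ?case
  proof (cases "z = x")
    case False
    then have h: "(z \<noteq> y \<or> x \<notin> fv g) \<and> free_for y x g" using All.prems by auto
    have "fv (inst (s(z := Var z)) g) \<subseteq> fv g" using fv_inst_sc sc_upd All.prems by blast
    moreover have "free_for y x (inst (s(z := Var z)) g)" using h All.IH sc_upd[OF All.prems(2)] by blast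
    ultimately show ?thesis using h False by auto
  qed simp
qed auto

lemma variant_inst: "variant f g \<Longrightarrow> sc s \<Longrightarrow> variant (inst s f) (inst s g)"
proof (induction arbitrary: s rule: variant.induct)
  case (v_refl f)
  show ?case by (rule variant.v_refl)
next
  case (v_sym f g)
  then show ?case by (blast intro: variant.v_sym)
next
  case (v_trans f g h)
  then show ?case by (blast intro: variant.v_trans)
next
  case (v_Neg f g)
  then show ?case by (simp add: variant.v_Neg)
next
  case (v_Box f g)
  then show ?case by (simp add: variant.v_Box)
next
  case (v_All f g x)
  have "variant (inst (s(x := Var x)) f) (inst (s(x := Var x)) g)"
    using v_All.IH sc_upd[OF v_All.prems] by blast
  then show ?case by (simp add: variant.v_All)
next
  case (v_Imp f g f' g')
  then show ?case by (simp add: variant.v_Imp)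
next
  case (v_void x f)
  have "fv (inst (s(x := Var x)) f) \<subseteq> fv f" using fv_inst_sc sc_upd v_void.prems by blast
  then have "variant (All x (inst (s(x := Var x)) f)) (inst (s(x := Var x)) f)"
    using v_void.hyps by (intro variant.v_void) auto
  moreover have "inst (s(x := Var x)) f = inst s f" using v_void.hyps by (intro inst_cong) auto
  ultimately show ?case by simp
next
  case (v_rename y x f)
  let ?sx = "s(x := Var x)" and ?sy = "s(y := Var y)" and ?b = "Var(x := Var y)"
  have sx: "sc ?sx" using sc_upd v_rename.prems by blast
  have yn: "y \<notin> fv (All x (inst ?sx f))" using fv_inst_sc[OF sx, of f] v_rename.hyps(1) by auto
  have ffi: "free_for y x (inst ?sx f)" using free_for_inst[OF v_rename.hyps(2) sx] .
  have v1: "variant (All x (inst ?sx f)) (All y (subst x (Var y) (inst ?sx f)))"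
    using variant.v_rename[OF yn ffi] .
  have e1: "subst x (Var y) (inst ?sx f) = inst (\<lambda>z. tsub ?b (?sx z)) f"
    unfolding subst_def using inst_comp[OF safe_sc[OF sx]] .
  have e2: "inst ?sy (subst x (Var y) f) = inst (\<lambda>z. tsub ?sy (?b z)) f"
    unfolding subst_def using inst_comp[OF safe_rename[OF v_rename.hyps(2)]] .
  have e3: "inst (\<lambda>z. tsub ?b (?sx z)) f = inst (\<lambda>z. tsub ?sy (?b z)) f"
  proof (rule inst_cong, rule ballI)
    fix z assume z: "z \<in> fv f"
    show "tsub ?b (?sx z) = tsub ?sy (?b z)"
    proof (cases "z = x")
      case False
      then have "z \<noteq> y" using z v_rename.hyps(1) by auto
      have "s z = Var z \<or> (\<exists>k. s z = Cst k)" using v_rename.prems unfolding sc_def by blast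
      then show ?thesis using False \<open>z \<noteq> y\<close> by auto
    qed simp
  qed
  show ?case using v1 e1 e2 e3 by simp
qed

definition lab :: "(tv \<times> ('p, 'k) fm) set \<Rightarrow> ('p, 'k) fm \<Rightarrow> tv option" where
  "lab H \<chi> = (if \<exists>L g. (L, g) \<in> H \<and> variant g \<chi>
     then Some (SOME L. \<exists>g. (L, g) \<in> H \<and> variant g \<chi>) else None)"

definition opn :: "(tv \<times> ('p, 'k) fm) set \<Rightarrow> bool" where
  "opn H \<longleftrightarrow> (\<forall>L g L' g'. (L, g) \<in> H \<and> (L', g') \<in> H \<and> variant g g' \<longrightarrow> L = L')"

lemma lab_some: "opn H \<Longrightarrow> (L, g) \<in> H \<Longrightarrow> variant g \<chi> \<Longrightarrow> lab H \<chi> = Some L"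
proof -
  assume o: "opn H" and m: "(L, g) \<in> H" and v: "variant g \<chi>"
  then have ex: "\<exists>L g. (L, g) \<in> H \<and> variant g \<chi>" by blast
  let ?L = "SOME L. \<exists>g. (L, g) \<in> H \<and> variant g \<chi>"
  have "\<exists>g. (?L, g) \<in> H \<and> variant g \<chi>" using someI_ex[of "\<lambda>L. \<exists>g. (L, g) \<in> H \<and> variant g \<chi>"] ex by blast
  then obtain g' where g': "(?L, g') \<in> H" "variant g' \<chi>" by blast
  have "variant g g'" using v g'(2) by (blast intro: variant.v_trans variant.v_sym)
  then have "L = ?L" using o m g'(1) unfolding opn_def by blast
  then show ?thesis unfolding lab_def using ex by simp
qed

lemma lab_variant: "variant \<chi> \<chi>' \<Longrightarrow> lab H \<chi> = lab H \<chi>'"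
proof -
  assume v: "variant \<chi> \<chi>'"
  have "\<And>g. variant g \<chi> \<longleftrightarrow> variant g \<chi>'" using v by (blast intro: variant.v_trans variant.v_sym)
  then show ?thesis unfolding lab_def by simp
qed

lemma lab_SomeD: "lab H \<chi> = Some L \<Longrightarrow> \<exists>g. (L, g) \<in> H \<and> variant g \<chi>"
proof -
  assume h: "lab H \<chi> = Some L"
  then have ex: "\<exists>L g. (L, g) \<in> H \<and> variant g \<chi>" unfolding lab_def by (auto split: if_splits)
  then have "L = (SOME L. \<exists>g. (L, g) \<in> H \<and> variant g \<chi>)" using h unfolding lab_def by auto
  then show ?thesis using someI_ex[of "\<lambda>L. \<exists>g. (L, g) \<in> H \<and> variant g \<chi>"] ex by simp
qed

fun nt :: "tv \<Rightarrow> tv" where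
  "nt TT = FF" | "nt Tt = Ff" | "nt Ff = Tt" | "nt FF = TT"

definition bd :: "tv \<Rightarrow> tv" where "bd d = (if d = TT then TT else FF)"

definition idf :: "tv \<Rightarrow> tv \<Rightarrow> tv" where "idf a b = (SOME x. x \<in> impT a b)"

definition minT :: "tv set \<Rightarrow> tv" where
  "minT X = (if FF \<in> X then FF else if Ff \<in> X then Ff else if Tt \<in> X then Tt else TT)"

lemma nt_in: "nt a \<in> negT a" by (cases a) auto

lemma bd_in: "bd d \<in> boxT d" unfolding bd_def by (cases d) auto

lemma impT_ne: "\<exists>x. x \<in> impT a b" by (cases a; cases b) auto

lemma idf_in: "idf a b \<in> impT a b" unfolding idf_def using someI_ex[OF impT_ne] .

lemma minT_in: "X \<noteq> {} \<Longrightarrow> minT X \<in> forallT X"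
proof -
  assume "X \<noteq> {}"
  then obtain b where b: "b \<in> X" by blast
  have mem: "minT X \<in> X" using b unfolding minT_def by (cases b) auto
  have le: "\<forall>b\<in>X. rank (minT X) \<le> rank b"
  proof
    fix c assume "c \<in> X"
    then show "rank (minT X) \<le> rank c" unfolding minT_def by (cases c) auto
  qed
  show ?thesis using mem le unfolding forallT_def by blast
qed

primrec val :: "(tv \<times> ('p, 'k) fm) set \<Rightarrow> 'k set \<Rightarrow> (nat \<Rightarrow> 'k) \<Rightarrow> ('p, 'k) fm \<Rightarrow> tv" where
  "val H B e (Atom p ts) = (case lab H (inst (Cst \<circ> e) (Atom p ts)) of Some L \<Rightarrow> L | None \<Rightarrow> FF)"
| "val H B e (Neg f) = nt (val H B e f)"
| "val H B e (Box f) = (let d = val H B e f in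
     case lab H (inst (Cst \<circ> e) (Box f)) of Some L \<Rightarrow> if L \<in> boxT d then L else bd d | None \<Rightarrow> bd d)"
| "val H B e (All x f) = minT ((\<lambda>k. val H B (e(x := k)) f) ` B)"
| "val H B e (Imp f g) = (let a = val H B e f; b = val H B e g in
     case lab H (inst (Cst \<circ> e) (Imp f g)) of Some L \<Rightarrow> if L \<in> impT a b then L else idf a b
       | None \<Rightarrow> idf a b)"

lemma val_Box_in: "val H B e (Box f) \<in> boxT (val H B e f)"
  using bd_in by (auto simp: Let_def split: option.splits)

lemma val_Imp_in: "val H B e (Imp f g) \<in> impT (val H B e f) (val H B e g)"
  using idf_in by (auto simp: Let_def split: option.splits)

lemma val_cong: "(\<forall>z\<in>fv f. e z = e' z) \<Longrightarrow> val H B e f = val H B e' f"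
proof (induction f arbitrary: e e')
  case (Atom p ts)
  have "inst (Cst \<circ> e) (Atom p ts) = inst (Cst \<circ> e') (Atom p ts)" using Atom by (intro inst_cong) auto
  then show ?case by (simp del: inst_Atom)
next
  case (Neg f)
  have "val H B e f = val H B e' f" using Neg.prems by (intro Neg.IH) simp
  then show ?case by simp
next
  case (Box f)
  have "inst (Cst \<circ> e) (Box f) = inst (Cst \<circ> e') (Box f)" using Box.prems by (intro inst_cong) auto
  moreover have "val H B e f = val H B e' f" using Box by auto
  ultimately show ?case by (simp only: val.simps)
next
  case (Imp f g)
  have "inst (Cst \<circ> e) (Imp f g) = inst (Cst \<circ> e') (Imp f g)" using Imp.prems by (intro inst_cong) auto
  moreover have "val H B e f = val H B e' f" using Imp by auto
  moreover have "val H B e g = val H B e' g" using Imp by auto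
  ultimately show ?case by (simp only: val.simps)
next
  case (All x f)
  have "\<And>k. val H B (e(x := k)) f = val H B (e'(x := k)) f" using All by auto
  then show ?case by simp
qed

definition ev :: "(nat \<Rightarrow> 'k tm) \<Rightarrow> (nat \<Rightarrow> 'k) \<Rightarrow> nat \<Rightarrow> 'k" where
  "ev s e z = (case s z of Var w \<Rightarrow> e w | Cst k \<Rightarrow> k)"

lemma tsub_ev: "(\<lambda>z. tsub (Cst \<circ> e) (s z)) = Cst \<circ> ev s e"
  by (rule ext) (auto simp: ev_def split: tm.split)

lemma inst_ev: "safe s f \<Longrightarrow> inst (Cst \<circ> e) (inst s f) = inst (Cst \<circ> ev s e) f"
  using inst_comp[of s f "Cst \<circ> e"] tsub_ev by metis

lemma val_inst: "safe s f \<Longrightarrow> val H B e (inst s f) = val H B (ev s e) f"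
proof (induction f arbitrary: s e)
  case (Atom p ts)
  have c: "inst (Cst \<circ> e) (inst s (Atom p ts)) = inst (Cst \<circ> ev s e) (Atom p ts)"
    using inst_ev[of s "Atom p ts" e] by simp
  have eq: "inst s (Atom p ts) = Atom p (map (tsub s) ts)" by simp
  have "val H B e (Atom p (map (tsub s) ts)) =
    (case lab H (inst (Cst \<circ> e) (Atom p (map (tsub s) ts))) of Some L \<Rightarrow> L | None \<Rightarrow> FF)"
    by (simp only: val.simps)
  then have "val H B e (inst s (Atom p ts)) =
    (case lab H (inst (Cst \<circ> e) (inst s (Atom p ts))) of Some L \<Rightarrow> L | None \<Rightarrow> FF)"
    by (simp only: eq)
  then show ?case using c by (simp only: val.simps)
next
  case (Neg f)
  have "val H B e (inst s f) = val H B (ev s e) f" using Neg.prems by (intro Neg.IH) simp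
  then show ?case by simp
next
  case (Box f)
  have "inst (Cst \<circ> e) (inst s (Box f)) = inst (Cst \<circ> ev s e) (Box f)"
    using inst_ev[of s "Box f" e] Box.prems by simp
  moreover have "val H B e (inst s f) = val H B (ev s e) f" using Box by auto
  ultimately show ?case by (simp only: val.simps inst.simps)
next
  case (Imp f g)
  have "inst (Cst \<circ> e) (inst s (Imp f g)) = inst (Cst \<circ> ev s e) (Imp f g)"
    using inst_ev[of s "Imp f g" e] Imp.prems by simp
  moreover have "val H B e (inst s f) = val H B (ev s e) f" using Imp by auto
  moreover have "val H B e (inst s g) = val H B (ev s e) g" using Imp by auto
  ultimately show ?case by (simp only: val.simps inst.simps)
next
  case (All x f)
  have sf: "safe (s(x := Var x)) f" and nc: "\<forall>z\<in>fv f - {x}. s z \<noteq> Var x" using All.prems by auto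
  have "\<And>k. val H B (e(x := k)) (inst (s(x := Var x)) f) = val H B ((ev s e)(x := k)) f"
  proof -
    fix k
    have "val H B (e(x := k)) (inst (s(x := Var x)) f) = val H B (ev (s(x := Var x)) (e(x := k))) f"
      using All.IH[OF sf] .
    also have "\<dots> = val H B ((ev s e)(x := k)) f"
    proof (rule val_cong, rule ballI)
      fix z assume z: "z \<in> fv f"
      show "ev (s(x := Var x)) (e(x := k)) z = ((ev s e)(x := k)) z"
      proof (cases "z = x")
        case False
        then have "s z \<noteq> Var x" using nc z by auto
        then show ?thesis using False unfolding ev_def by (auto split: tm.split)
      qed (simp add: ev_def)
    qed
    finally show "val H B (e(x := k)) (inst (s(x := Var x)) f) = val H B ((ev s e)(x := k)) f" .
  qed
  then show ?case by simp
qed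

lemma val_subst: "val H B e (subst x (Cst k) f) = val H B (e(x := k)) f"
proof -
  have "ev (Var(x := Cst k)) e = e(x := k)" by (rule ext) (simp add: ev_def)
  then show ?thesis unfolding subst_def using val_inst[OF safe_sc[OF sc_cst]] by metis
qed

lemma val_All_subst: "val H B e (All x f) = minT ((\<lambda>k. val H B e (subst x (Cst k) f)) ` B)"
  by (simp add: val_subst)

lemma val_variant: "variant f g \<Longrightarrow> val H B e f = val H B e g" if "B \<noteq> {}"
proof (induction arbitrary: e rule: variant.induct)
  case (v_Box f g)
  have "lab H (inst (Cst \<circ> e) (Box f)) = lab H (inst (Cst \<circ> e) (Box g))"
    by (rule lab_variant, rule variant_inst[OF variant.v_Box[OF v_Box.hyps] sc_cst2])
  then show ?case using v_Box.IH by (simp only: val.simps)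
next
  case (v_Imp f g f' g')
  have "lab H (inst (Cst \<circ> e) (Imp f f')) = lab H (inst (Cst \<circ> e) (Imp g g'))"
    by (rule lab_variant, rule variant_inst[OF variant.v_Imp[OF v_Imp.hyps(1) v_Imp.hyps(2)] sc_cst2])
  then show ?case using v_Imp.IH by (simp only: val.simps)
next
  case (v_All f g x)
  have "\<And>k. val H B (e(x := k)) f = val H B (e(x := k)) g" using v_All.IH by blast
  then show ?case by (simp only: val.simps)
next
  case (v_void x f)
  have "\<And>k. val H B (e(x := k)) f = val H B e f" using v_void.hyps by (intro val_cong) auto
  then have "(\<lambda>k. val H B (e(x := k)) f) ` B = {val H B e f}" using that by auto
  then show ?case by (cases "val H B e f") (simp_all add: minT_def)
next
  case (v_rename y x f)
  have "\<And>k. val H B (e(y := k)) (subst x (Var y) f) = val H B (e(x := k)) f"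
  proof -
    fix k
    have "val H B (e(y := k)) (subst x (Var y) f) = val H B (ev (Var(x := Var y)) (e(y := k))) f"
      unfolding subst_def using val_inst[OF safe_rename[OF v_rename.hyps(2)]] .
    also have "\<dots> = val H B (e(x := k)) f"
    proof (rule val_cong, rule ballI)
      fix z assume z: "z \<in> fv f"
      show "ev (Var(x := Var y)) (e(y := k)) z = (e(x := k)) z"
      proof (cases "z = x")
        case False
        then have "z \<noteq> y" using z v_rename.hyps(1) by auto
        then show ?thesis using False by (simp add: ev_def)
      qed (simp add: ev_def)
    qed
    finally show "val H B (e(y := k)) (subst x (Var y) f) = val H B (e(x := k)) f" .
  qed
  then show ?case by simp
qed auto

definition sat :: "(tv \<times> ('p, 'k) fm) set \<Rightarrow> 'k set \<Rightarrow> bool" where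
  "sat H B \<longleftrightarrow>
   (\<forall>L f. (L, f) \<in> H \<longrightarrow> palts L f \<noteq> [] \<longrightarrow> (\<exists>A\<in>set (palts L f). A \<subseteq> H)) \<and>
   (\<forall>x g. (TT, All x g) \<in> H \<longrightarrow> (\<forall>k\<in>B. (TT, subst x (Cst k) g) \<in> H)) \<and>
   (\<forall>x g. (FF, All x g) \<in> H \<longrightarrow> (\<exists>k\<in>B. (FF, subst x (Cst k) g) \<in> H)) \<and>
   (\<forall>x g. (Tt, All x g) \<in> H \<longrightarrow> (\<exists>c\<in>B. (Tt, subst x (Cst c) g) \<in> H \<and>
      (\<forall>k\<in>B. k \<noteq> c \<longrightarrow> (Tt, subst x (Cst k) g) \<in> H \<or> (TT, subst x (Cst k) g) \<in> H))) \<and>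
   (\<forall>x g. (Ff, All x g) \<in> H \<longrightarrow> (\<exists>c\<in>B. (Ff, subst x (Cst c) g) \<in> H \<and>
      (\<forall>k\<in>B. k \<noteq> c \<longrightarrow> (Ff, subst x (Cst k) g) \<in> H \<or> (TT, subst x (Cst k) g) \<in> H
          \<or> (Tt, subst x (Cst k) g) \<in> H)))"

lemma inst_upd: "subst x (Cst k) (inst ((Cst \<circ> e)(x := Var x)) f) = inst (Cst \<circ> (e(x := k))) f"
proof -
  have "subst x (Cst k) (inst ((Cst \<circ> e)(x := Var x)) f) =
     inst (\<lambda>z. tsub (Var(x := Cst k)) (((Cst \<circ> e)(x := Var x)) z)) f"
    unfolding subst_def by (rule inst_comp[OF safe_sc[OF sc_cst3]])
  also have "(\<lambda>z. tsub (Var(x := Cst k)) (((Cst \<circ> e)(x := Var x)) z)) = Cst \<circ> (e(x := k))"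
    by (rule ext) simp
  finally show ?thesis .
qed

lemma truth:
  assumes o: "opn H" and s: "sat H B" and B: "B \<noteq> {}"
  shows "(L, inst (Cst \<circ> e) \<psi>) \<in> H \<Longrightarrow> val H B e \<psi> = L"
proof (induction \<psi> arbitrary: e L)
  case (Atom p ts)
  have "lab H (inst (Cst \<circ> e) (Atom p ts)) = Some L" using lab_some[OF o Atom variant.v_refl] .
  then show ?case by (simp only: val.simps) simp
next
  case (Neg f)
  let ?c = "inst (Cst \<circ> e) f"
  have m: "(L, Neg ?c) \<in> H" using Neg.prems by (simp only: inst.simps)
  then obtain A where A: "A \<in> set (palts L (Neg ?c))" "A \<subseteq> H" using s unfolding sat_def
    by (metis (no_types) list.distinct(1) palts.simps(1,2,3,4) tv.exhaust)
  have "\<exists>M. (M, ?c) \<in> H \<and> nt M = L" using A by (cases L) auto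
  then obtain M where M: "(M, ?c) \<in> H" "nt M = L" by blast
  then have "val H B e f = M" using Neg.IH by blast
  then show ?case using M by simp
next
  case (Box f)
  let ?c = "inst (Cst \<circ> e) f"
  have m: "(L, inst (Cst \<circ> e) (Box f)) \<in> H" using Box.prems by (simp only: inst.simps)
  have lb: "lab H (inst (Cst \<circ> e) (Box f)) = Some L" using lab_some[OF o m variant.v_refl] .
  have m': "(L, Box ?c) \<in> H" using Box.prems by (simp only: inst.simps)
  then obtain A where A: "A \<in> set (palts L (Box ?c))" "A \<subseteq> H" using s unfolding sat_def
    by (metis (no_types) list.distinct(1) palts.simps(5,6,7,8) tv.exhaust)
  have "\<exists>M. (M, ?c) \<in> H \<and> L \<in> boxT M" using A by (cases L) auto
  then obtain M where "(M, ?c) \<in> H" "L \<in> boxT M" by blast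
  then have "val H B e f = M" "L \<in> boxT M" using Box.IH by blast+
  then show ?case using lb by (simp only: val.simps Let_def) simp
next
  case (Imp f g)
  let ?c = "inst (Cst \<circ> e) f" and ?d = "inst (Cst \<circ> e) g"
  have m: "(L, inst (Cst \<circ> e) (Imp f g)) \<in> H" using Imp.prems by (simp only: inst.simps)
  have lb: "lab H (inst (Cst \<circ> e) (Imp f g)) = Some L" using lab_some[OF o m variant.v_refl] .
  have m': "(L, Imp ?c ?d) \<in> H" using Imp.prems by (simp only: inst.simps)
  then obtain A where A: "A \<in> set (palts L (Imp ?c ?d))" "A \<subseteq> H" using s unfolding sat_def
    by (metis (no_types) list.distinct(1) palts.simps(9,10,11,12) tv.exhaust)
  have vf: "\<And>M. (M, ?c) \<in> H \<Longrightarrow> val H B e f = M" using Imp.IH(1) by blast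
  have vg: "\<And>M. (M, ?d) \<in> H \<Longrightarrow> val H B e g = M" using Imp.IH(2) by blast
  have "L \<in> impT (val H B e f) (val H B e g)"
  proof (cases L)
    case TT
    then show ?thesis using A vf vg by (cases "val H B e f"; cases "val H B e g") auto
  next
    case Tt
    then show ?thesis using A vf vg by (cases "val H B e f"; cases "val H B e g") auto
  next
    case Ff
    then show ?thesis using A vf vg by (cases "val H B e f"; cases "val H B e g") auto
  next
    case FF
    then show ?thesis using A vf vg by (cases "val H B e f"; cases "val H B e g") auto
  qed
  then show ?case using lb by (simp only: val.simps Let_def) simp
next
  case (All x f)
  let ?g = "inst ((Cst \<circ> e)(x := Var x)) f"
  have m: "(L, All x ?g) \<in> H" using All.prems by (simp only: inst.simps)
  have inst_k: "\<And>k. subst x (Cst k) ?g = inst (Cst \<circ> (e(x := k))) f" by (rule inst_upd)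
  have vk: "\<And>k M. (M, subst x (Cst k) ?g) \<in> H \<Longrightarrow> val H B (e(x := k)) f = M"
    using All.IH inst_k by metis
  let ?X = "(\<lambda>k. val H B (e(x := k)) f) ` B"
  have "minT ?X = L"
  proof (cases L)
    case TT
    then have "\<forall>k\<in>B. (TT, subst x (Cst k) ?g) \<in> H" using s m unfolding sat_def by blast
    then have a: "\<forall>k\<in>B. val H B (e(x := k)) f = TT" using vk by blast
    obtain k0 where "k0 \<in> B" using B by blast
    then have "?X = {TT}" using a by force
    then show ?thesis using TT by (simp add: minT_def)
  next
    case FF
    then obtain k where "k \<in> B" "(FF, subst x (Cst k) ?g) \<in> H" using s m unfolding sat_def by blast
    then have "FF \<in> ?X" using vk by force
    then show ?thesis using FF by (simp add: minT_def)
  next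
    case Tt
    then obtain c where c: "c \<in> B" "(Tt, subst x (Cst c) ?g) \<in> H"
      "\<forall>k\<in>B. k \<noteq> c \<longrightarrow> (Tt, subst x (Cst k) ?g) \<in> H \<or> (TT, subst x (Cst k) ?g) \<in> H"
      using s m unfolding sat_def by blast
    have "Tt \<in> ?X" using c vk by force
    moreover have "\<forall>v\<in>?X. v = Tt \<or> v = TT" using c vk by fastforce
    ultimately show ?thesis using Tt unfolding minT_def by auto
  next
    case Ff
    then obtain c where c: "c \<in> B" "(Ff, subst x (Cst c) ?g) \<in> H"
      "\<forall>k\<in>B. k \<noteq> c \<longrightarrow> (Ff, subst x (Cst k) ?g) \<in> H \<or> (TT, subst x (Cst k) ?g) \<in> H
          \<or> (Tt, subst x (Cst k) ?g) \<in> H"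
      using s m unfolding sat_def by blast
    have "Ff \<in> ?X" using c vk by force
    moreover have "\<forall>v\<in>?X. v = Ff \<or> v = Tt \<or> v = TT" using c vk by fastforce
    ultimately show ?thesis using Ff unfolding minT_def by auto
  qed
  then show ?case by simp
qed

type_synonym ('p, 'c) st = "('p, 'c) sfm list \<times> (('p, 'c) sfm \<Rightarrow> ('c + nat) option)"

definition Inv :: "'c set \<Rightarrow> ('c + nat) set \<Rightarrow> ('p, 'c) st \<Rightarrow> bool" where
  "Inv C B st \<longleftrightarrow> \<not> closable C (set (fst st)) (snd st) \<and>
    (\<forall>L x g c. snd st (L, All x g) = Some c \<longrightarrow> c \<in> B \<and> (L, subst x (Cst c) g) \<in> set (fst st))"

definition extd :: "('p, 'c) st \<Rightarrow> ('p, 'c) st \<Rightarrow> bool" where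
  "extd st st' \<longleftrightarrow> (\<exists>ys. fst st' = fst st @ ys) \<and> (\<forall>k v. snd st k = Some v \<longrightarrow> snd st' k = Some v)"

definition hdl :: "tv \<Rightarrow> ('p, 'c + nat) fm \<Rightarrow> 'c + nat \<Rightarrow> ('p, 'c) sfm set
    \<Rightarrow> (('p, 'c) sfm \<Rightarrow> ('c + nat) option) \<Rightarrow> bool" where
  "hdl L f cj S W \<longleftrightarrow> (palts L f \<noteq> [] \<longrightarrow> (\<exists>A\<in>set (palts L f). A \<subseteq> S)) \<and>
   (\<forall>x g. f = All x g \<longrightarrow>
     (L = TT \<longrightarrow> (TT, subst x (Cst cj) g) \<in> S) \<and>
     (L = FF \<longrightarrow> W (FF, f) \<noteq> None) \<and>
     (L = Tt \<longrightarrow> (\<exists>c. W (Tt, f) = Some c \<and> (cj \<noteq> c \<longrightarrow>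
         (Tt, subst x (Cst cj) g) \<in> S \<or> (TT, subst x (Cst cj) g) \<in> S))) \<and>
     (L = Ff \<longrightarrow> (\<exists>c. W (Ff, f) = Some c \<and> (cj \<noteq> c \<longrightarrow>
         (Ff, subst x (Cst cj) g) \<in> S \<or> (TT, subst x (Cst cj) g) \<in> S \<or> (Tt, subst x (Cst cj) g) \<in> S))))"

lemma extd_refl: "extd st st" unfolding extd_def by auto

lemma extd_trans: "extd a b \<Longrightarrow> extd b c \<Longrightarrow> extd a c"
  unfolding extd_def by (metis append.assoc)

lemma finite_const_set: "finite (const_set f)"
proof (induction f)
  case (Atom p ts)
  have "{k. Cst k \<in> set ts} \<subseteq> (\<lambda>t. case t of Cst k \<Rightarrow> k | Var x \<Rightarrow> undefined) ` set ts"
    by (auto intro: rev_image_eqI)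
  then show ?case by (simp add: finite_subset)
qed auto

lemma finite_bconsts: "finite S \<Longrightarrow> finite (bconsts S)"
  unfolding bconsts_def using finite_const_set by auto

lemma fresh_Inr: "finite (F :: ('c + nat) set) \<Longrightarrow> \<exists>n. Inr n \<notin> F"
proof (rule ccontr)
  assume f: "finite F" and "\<not> (\<exists>n. Inr n \<notin> F)"
  then have "range Inr \<subseteq> F" by auto
  then have "finite (range (Inr :: nat \<Rightarrow> 'c + nat))" using f finite_subset by blast
  then have "finite (UNIV :: nat set)" using finite_imageD[of Inr UNIV] by auto
  then show False by simp
qed

definition addl :: "'a list \<Rightarrow> 'a set \<Rightarrow> 'a list" where
  "addl lst A = lst @ (SOME xs. set xs = A)"

lemma set_addl: "finite A \<Longrightarrow> set (addl lst A) = set lst \<union> A"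
  unfolding addl_def using someI_ex[OF finite_list] by auto

lemma palts_fin: "A \<in> set (palts L f) \<Longrightarrow> finite A"
  by (cases L; cases f) auto

lemma add_same:
  assumes "Inv C B (lst, W)" "finite A" "\<not> closable C (set lst \<union> A) W"
  shows "Inv C B (addl lst A, W) \<and> extd (lst, W) (addl lst A, W)"
  using assms set_addl[OF assms(2), of lst] unfolding Inv_def extd_def addl_def by auto

lemma add_key:
  assumes "Inv C B (lst, W)" "finite A" "W (L, All x g) = None" "c \<in> B"
    "(L, subst x (Cst c) g) \<in> A" "\<not> closable C (set lst \<union> A) (W((L, All x g) := Some c))"
  shows "Inv C B (addl lst A, W((L, All x g) := Some c)) \<and> extd (lst, W) (addl lst A, W((L, All x g) := Some c))"
proof
  have s: "set (addl lst A) = set lst \<union> A" using set_addl[OF assms(2)] .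
  show "Inv C B (addl lst A, W((L, All x g) := Some c))"
    using assms(1,4,5,6) s unfolding Inv_def by auto
  show "extd (lst, W) (addl lst A, W((L, All x g) := Some c))"
    using assms(3) unfolding extd_def addl_def by auto
qed

lemma exI_st: "Inv C B st' \<and> extd st st' \<Longrightarrow> hdl L f cj (set (fst st')) (snd st') \<Longrightarrow>
  \<exists>st'. Inv C B st' \<and> extd st st' \<and> hdl L f cj (set (fst st')) (snd st')"
  by blast

lemma step_prop:
  assumes inv: "Inv C B (lst, W)" and mem: "(L, f) \<in> set lst" and ne: "palts L f \<noteq> []"
    and na: "\<forall>x g. f \<noteq> All x g"
  shows "\<exists>st'. Inv C B st' \<and> extd (lst, W) st' \<and> hdl L f cj (set (fst st')) (snd st')"
proof -
  have nc: "\<not> closable C (set lst) W" using inv unfolding Inv_def by simp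
  have "\<exists>A\<in>set (palts L f). \<not> closable C (set lst \<union> A) W"
    using closable.cl_prop[OF mem ne, of C W] nc by blast
  then obtain A where A: "A \<in> set (palts L f)" "\<not> closable C (set lst \<union> A) W" by blast
  have fa: "finite A" using palts_fin[OF A(1)] .
  have r: "Inv C B (addl lst A, W) \<and> extd (lst, W) (addl lst A, W)" using add_same[OF inv fa A(2)] .
  have sub: "A \<subseteq> set (addl lst A)" using set_addl[OF fa] by blast
  have "hdl L f cj (set (addl lst A)) W" unfolding hdl_def
    apply (intro conjI impI allI)
    using A(1) sub na by blast+
  then show ?thesis using exI_st[OF r] by simp
qed

lemma step_ex:
  assumes inv: "Inv C B (lst, W)" and mem: "(L, f) \<in> set lst" and cj: "cj \<in> B"
    and tc: "\<forall>k\<in>B. tconst C k" and rB: "range Inr \<subseteq> B"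
  shows "\<exists>st'. Inv C B st' \<and> extd (lst, W) st' \<and> hdl L f cj (set (fst st')) (snd st')"
proof (cases f)
  case (Atom p ts)
  then have "hdl L f cj (set lst) W" unfolding hdl_def by simp
  then show ?thesis using exI_st[OF conjI[OF inv extd_refl]] by simp
next
  case (Neg g)
  then show ?thesis using step_prop[OF inv mem] by (cases L) auto
next
  case (Box g)
  then show ?thesis using step_prop[OF inv mem] by (cases L) auto
next
  case (Imp g h)
  then show ?thesis using step_prop[OF inv mem] by (cases L) auto
next
  case (All x g)
  have nc: "\<not> closable C (set lst) W" using inv unfolding Inv_def by simp
  have tcj: "tconst C cj" using tc cj by blast
  have fin: "finite (bconsts (set lst) \<union> {cj})" using finite_bconsts by blast
  obtain n where n: "Inr n \<notin> bconsts (set lst) \<union> {cj}" using fresh_Inr[OF fin] by blast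
  let ?c = "Inr n :: 'c + nat"
  have cB: "?c \<in> B" using rB by blast
  have tcc: "tconst C ?c" by simp
  have cnb: "?c \<notin> bconsts (set lst)" and ccj: "cj \<noteq> ?c" using n by auto
  let ?i = "\<lambda>k. subst x (Cst k) g"
  show ?thesis
  proof (cases L)
    case TT
    have m: "(TT, All x g) \<in> set lst" using mem TT All by simp
    have "\<not> closable C (insert (TT, ?i cj) (set lst)) W"
      using closable.cl_TAll[OF m tcj] nc by blast
    then have "\<not> closable C (set lst \<union> {(TT, ?i cj)}) W" by simp
    then have r: "Inv C B (addl lst {(TT, ?i cj)}, W) \<and> extd (lst, W) (addl lst {(TT, ?i cj)}, W)"
      using add_same[OF inv] by blast
    have "hdl L f cj (set (addl lst {(TT, ?i cj)})) W"
      unfolding hdl_def using TT All set_addl[of "{(TT, ?i cj)}" lst] by simp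
    then show ?thesis using exI_st[OF r] by simp
  next
    case FF
    have m: "(FF, All x g) \<in> set lst" using mem FF All by simp
    show ?thesis
    proof (cases "W (FF, All x g)")
      case None
      have "\<not> closable C (insert (FF, ?i ?c) (set lst)) (W((FF, All x g) := Some ?c))"
        using closable.cl_FAll[where W=W, OF m None tcc cnb] nc by blast
      then have "\<not> closable C (set lst \<union> {(FF, ?i ?c)}) (W((FF, All x g) := Some ?c))" by simp
      then have r: "Inv C B (addl lst {(FF, ?i ?c)}, W((FF, All x g) := Some ?c)) \<and>
          extd (lst, W) (addl lst {(FF, ?i ?c)}, W((FF, All x g) := Some ?c))"
        using add_key[OF inv _ None cB] by blast
      have "hdl L f cj (set (addl lst {(FF, ?i ?c)})) (W((FF, All x g) := Some ?c))"
        unfolding hdl_def using FF All by simp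
      then show ?thesis using exI_st[OF r] by simp
    next
      case (Some c)
      have "hdl L f cj (set lst) W" unfolding hdl_def using FF All Some by simp
      then show ?thesis using exI_st[OF conjI[OF inv extd_refl]] by simp
    qed
  next
    case Tt
    have m: "(Tt, All x g) \<in> set lst" using mem Tt All by simp
    show ?thesis
    proof (cases "W (Tt, All x g)")
      case None
      let ?W = "W((Tt, All x g) := Some ?c)"
      let ?A1 = "{(Tt, ?i ?c), (Tt, ?i cj)}" and ?A2 = "{(Tt, ?i ?c), (TT, ?i cj)}"
      have "\<not> closable C (set lst \<union> ?A1) ?W \<or> \<not> closable C (set lst \<union> ?A2) ?W"
        using closable.cl_tAll[where W=W, OF m None tcc cnb tcj ccj] nc by blast
      then obtain A where A: "A = ?A1 \<or> A = ?A2" "\<not> closable C (set lst \<union> A) ?W" by blast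
      have fA: "finite A" using A(1) by auto
      have iA: "(Tt, ?i ?c) \<in> A" using A(1) by auto
      have r: "Inv C B (addl lst A, ?W) \<and> extd (lst, W) (addl lst A, ?W)"
        using add_key[OF inv fA None cB iA A(2)] .
      have "hdl L f cj (set (addl lst A)) ?W"
        unfolding hdl_def using Tt All set_addl[OF fA, of lst] A(1) by auto
      then show ?thesis using exI_st[OF r] by simp
    next
      case (Some c)
      show ?thesis
      proof (cases "cj = c")
        case True
        have "hdl L f cj (set lst) W" unfolding hdl_def using Tt All Some True by simp
        then show ?thesis using exI_st[OF conjI[OF inv extd_refl]] by simp
      next
        case False
        have "\<not> closable C (insert (Tt, ?i cj) (set lst)) W \<or> \<not> closable C (insert (TT, ?i cj) (set lst)) W"
          using closable.cl_tAll_re[where W=W, OF m Some tcj False] nc by blast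
        then have "\<not> closable C (set lst \<union> {(Tt, ?i cj)}) W \<or> \<not> closable C (set lst \<union> {(TT, ?i cj)}) W"
          by simp
        then obtain A where A: "A = {(Tt, ?i cj)} \<or> A = {(TT, ?i cj)}" "\<not> closable C (set lst \<union> A) W"
          by blast
        have fA: "finite A" using A(1) by auto
        have r: "Inv C B (addl lst A, W) \<and> extd (lst, W) (addl lst A, W)" using add_same[OF inv fA A(2)] .
        have "hdl L f cj (set (addl lst A)) W"
          unfolding hdl_def using Tt All Some set_addl[OF fA, of lst] A(1) by auto
        then show ?thesis using exI_st[OF r] by simp
      qed
    qed
  next
    case Ff
    have m: "(Ff, All x g) \<in> set lst" using mem Ff All by simp
    show ?thesis
    proof (cases "W (Ff, All x g)")
      case None
      let ?W = "W((Ff, All x g) := Some ?c)"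
      let ?A1 = "{(Ff, ?i ?c), (Ff, ?i cj)}" and ?A2 = "{(Ff, ?i ?c), (TT, ?i cj)}"
        and ?A3 = "{(Ff, ?i ?c), (Tt, ?i cj)}"
      have "\<not> closable C (set lst \<union> ?A1) ?W \<or> \<not> closable C (set lst \<union> ?A2) ?W \<or> \<not> closable C (set lst \<union> ?A3) ?W"
        using closable.cl_fAll[where W=W, OF m None tcc cnb tcj ccj] nc by blast
      then obtain A where A: "A = ?A1 \<or> A = ?A2 \<or> A = ?A3" "\<not> closable C (set lst \<union> A) ?W" by blast
      have fA: "finite A" using A(1) by auto
      have iA: "(Ff, ?i ?c) \<in> A" using A(1) by auto
      have r: "Inv C B (addl lst A, ?W) \<and> extd (lst, W) (addl lst A, ?W)"
        using add_key[OF inv fA None cB iA A(2)] .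
      have "hdl L f cj (set (addl lst A)) ?W"
        unfolding hdl_def using Ff All set_addl[OF fA, of lst] A(1) by auto
      then show ?thesis using exI_st[OF r] by simp
    next
      case (Some c)
      show ?thesis
      proof (cases "cj = c")
        case True
        have "hdl L f cj (set lst) W" unfolding hdl_def using Ff All Some True by simp
        then show ?thesis using exI_st[OF conjI[OF inv extd_refl]] by simp
      next
        case False
        have "\<not> closable C (insert (Ff, ?i cj) (set lst)) W \<or> \<not> closable C (insert (TT, ?i cj) (set lst)) W
            \<or> \<not> closable C (insert (Tt, ?i cj) (set lst)) W"
          using closable.cl_fAll_re[where W=W, OF m Some tcj False] nc by blast
        then have "\<not> closable C (set lst \<union> {(Ff, ?i cj)}) W \<or> \<not> closable C (set lst \<union> {(TT, ?i cj)}) W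
            \<or> \<not> closable C (set lst \<union> {(Tt, ?i cj)}) W"
          by simp
        then obtain A where A: "A = {(Ff, ?i cj)} \<or> A = {(TT, ?i cj)} \<or> A = {(Tt, ?i cj)}"
          "\<not> closable C (set lst \<union> A) W"
          by blast
        have fA: "finite A" using A(1) by auto
        have r: "Inv C B (addl lst A, W) \<and> extd (lst, W) (addl lst A, W)" using add_same[OF inv fA A(2)] .
        have "hdl L f cj (set (addl lst A)) W"
          unfolding hdl_def using Ff All Some set_addl[OF fA, of lst] A(1) by auto
        then show ?thesis using exI_st[OF r] by simp
      qed
    qed
  qed
qed

definition nxt :: "'c set \<Rightarrow> ('c + nat) set \<Rightarrow> (nat \<Rightarrow> 'c + nat) \<Rightarrow> ('p, 'c) st \<Rightarrow> nat \<Rightarrow> ('p, 'c) st" where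
  "nxt C B cn st n = (case prod_decode (fst (prod_decode n)) of (a, j) \<Rightarrow>
     if a < length (fst st) then
       (SOME st'. Inv C B st' \<and> extd st st' \<and>
          hdl (fst (fst st ! a)) (snd (fst st ! a)) (cn j) (set (fst st')) (snd st'))
     else st)"

primrec chain :: "'c set \<Rightarrow> ('c + nat) set \<Rightarrow> (nat \<Rightarrow> 'c + nat) \<Rightarrow> ('p, 'c) st \<Rightarrow> nat \<Rightarrow> ('p, 'c) st" where
  "chain C B cn st0 0 = st0"
| "chain C B cn st0 (Suc n) = nxt C B cn (chain C B cn st0 n) n"

lemma nxt_ok:
  assumes inv: "Inv C B st" and rcn: "range cn = B" and tc: "\<forall>k\<in>B. tconst C k" and rB: "range Inr \<subseteq> B"
  shows "Inv C B (nxt C B cn st n) \<and> extd st (nxt C B cn st n) \<and>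
    (\<forall>a j. prod_decode (fst (prod_decode n)) = (a, j) \<longrightarrow> a < length (fst st) \<longrightarrow>
       hdl (fst (fst st ! a)) (snd (fst st ! a)) (cn j) (set (fst (nxt C B cn st n))) (snd (nxt C B cn st n)))"
proof -
  obtain a j where d: "prod_decode (fst (prod_decode n)) = (a, j)" by (cases "prod_decode (fst (prod_decode n))") auto
  obtain lst W where stv: "st = (lst, W)" by (cases st) auto
  show ?thesis
  proof (cases "a < length lst")
    case True
    let ?P = "\<lambda>st'. Inv C B st' \<and> extd st st' \<and>
          hdl (fst (fst st ! a)) (snd (fst st ! a)) (cn j) (set (fst st')) (snd st')"
    have mem: "(fst (lst ! a), snd (lst ! a)) \<in> set lst" using True by simp
    have cj: "cn j \<in> B" using rcn by blast
    have "\<exists>st'. ?P st'" using step_ex[OF inv[unfolded stv] mem cj tc rB] stv by simp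
    then have P: "?P (SOME st'. ?P st')" by (rule someI_ex)
    have e: "nxt C B cn st n = (SOME st'. ?P st')" unfolding nxt_def using d True stv by simp
    show ?thesis using P d unfolding e by auto
  next
    case False
    have e: "nxt C B cn st n = st" unfolding nxt_def using d False stv by simp
    show ?thesis using inv False d stv unfolding e by (auto simp: extd_refl)
  qed
qed

lemma chain_ok:
  assumes inv: "Inv C B st0" and rcn: "range cn = B" and tc: "\<forall>k\<in>B. tconst C k" and rB: "range Inr \<subseteq> B"
  shows "Inv C B (chain C B cn st0 n)"
  by (induction n) (auto simp: inv nxt_ok[OF _ rcn tc rB])

lemma chain_mono:
  assumes inv: "Inv C B st0" and rcn: "range cn = B" and tc: "\<forall>k\<in>B. tconst C k" and rB: "range Inr \<subseteq> B"
  shows "m \<le> n \<Longrightarrow> extd (chain C B cn st0 m) (chain C B cn st0 n)"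
proof (induction n)
  case 0
  then show ?case by (simp add: extd_refl)
next
  case (Suc n)
  show ?case
  proof (cases "m = Suc n")
    case True
    then show ?thesis by (simp add: extd_refl)
  next
    case False
    then have "extd (chain C B cn st0 m) (chain C B cn st0 n)" using Suc by simp
    moreover have "extd (chain C B cn st0 n) (chain C B cn st0 (Suc n))"
      using nxt_ok[OF chain_ok[OF inv rcn tc rB] rcn tc rB] by simp
    ultimately show ?thesis by (rule extd_trans)
  qed
qed

lemma extd_nth: "extd st st' \<Longrightarrow> a < length (fst st) \<Longrightarrow> a < length (fst st') \<and> fst st' ! a = fst st ! a"
  unfolding extd_def by (auto simp: nth_append)

lemma extd_sub: "extd st st' \<Longrightarrow> set (fst st) \<subseteq> set (fst st')"
  unfolding extd_def by auto

lemma extd_W: "extd st st' \<Longrightarrow> snd st k = Some v \<Longrightarrow> snd st' k = Some v"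
  unfolding extd_def by (cases k) auto

definition Hs :: "'c set \<Rightarrow> ('c + nat) set \<Rightarrow> (nat \<Rightarrow> 'c + nat) \<Rightarrow> ('p, 'c) st \<Rightarrow> ('p, 'c) sfm set" where
  "Hs C B cn st0 = (\<Union>n. set (fst (chain C B cn st0 n)))"

lemma in_H_hdl:
  assumes inv: "Inv C B st0" and rcn: "range cn = B" and tc: "\<forall>k\<in>B. tconst C k" and rB: "range Inr \<subseteq> B"
    and mem: "(L, f) \<in> Hs C B cn st0"
  shows "\<exists>n\<ge>m. hdl L f (cn j) (set (fst (chain C B cn st0 n))) (snd (chain C B cn st0 n))"
proof -
  let ?ch = "chain C B cn st0"
  obtain m0 where m0: "(L, f) \<in> set (fst (?ch m0))" using mem unfolding Hs_def by blast
  then obtain a where a: "a < length (fst (?ch m0))" "fst (?ch m0) ! a = (L, f)"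
    by (metis in_set_conv_nth)
  let ?n = "prod_encode (prod_encode (a, j), max m m0)"
  have nge: "max m m0 \<le> ?n" by (rule le_prod_encode_2)
  have ex: "extd (?ch m0) (?ch ?n)" using chain_mono[OF inv rcn tc rB] nge by simp
  have an: "a < length (fst (?ch ?n))" "fst (?ch ?n) ! a = (L, f)" using extd_nth[OF ex a(1)] a(2) by auto
  have d: "prod_decode (fst (prod_decode ?n)) = (a, j)" by simp
  have "hdl L f (cn j) (set (fst (?ch (Suc ?n)))) (snd (?ch (Suc ?n)))"
    using nxt_ok[OF chain_ok[OF inv rcn tc rB, of ?n] rcn tc rB, of ?n] d an by simp
  moreover have "m \<le> Suc ?n" using nge by simp
  ultimately show ?thesis by blast
qed

lemma chain_in_H: "set (fst (chain C B cn st0 n)) \<subseteq> Hs C B cn st0"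
  unfolding Hs_def by blast

lemma H_opn:
  assumes inv: "Inv C B st0" and rcn: "range cn = B" and tc: "\<forall>k\<in>B. tconst C k" and rB: "range Inr \<subseteq> B"
  shows "opn (Hs C B cn st0)"
  unfolding opn_def
proof (intro allI impI)
  fix L g L' g'
  assume h: "(L, g) \<in> Hs C B cn st0 \<and> (L', g') \<in> Hs C B cn st0 \<and> variant g g'"
  let ?ch = "chain C B cn st0"
  obtain n1 where n1: "(L, g) \<in> set (fst (?ch n1))" using h unfolding Hs_def by blast
  obtain n2 where n2: "(L', g') \<in> set (fst (?ch n2))" using h unfolding Hs_def by blast
  let ?n = "max n1 n2"
  have "(L, g) \<in> set (fst (?ch ?n))" using n1 extd_sub[OF chain_mono[OF inv rcn tc rB, of n1 ?n]] by auto
  moreover have "(L', g') \<in> set (fst (?ch ?n))" using n2 extd_sub[OF chain_mono[OF inv rcn tc rB, of n2 ?n]] by auto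
  moreover have "\<not> closable C (set (fst (?ch ?n))) (snd (?ch ?n))"
    using chain_ok[OF inv rcn tc rB, of ?n] unfolding Inv_def by blast
  ultimately show "L = L'" using h closable.cl_closed unfolding branch_closed_def by blast
qed

lemma H_sat:
  assumes inv: "Inv C B st0" and rcn: "range cn = B" and tc: "\<forall>k\<in>B. tconst C k" and rB: "range Inr \<subseteq> B"
  shows "sat (Hs C B cn st0) B"
proof -
  let ?ch = "chain C B cn st0" and ?H = "Hs C B cn st0"
  have hd: "\<And>L f m j. (L, f) \<in> ?H \<Longrightarrow> \<exists>n\<ge>m. hdl L f (cn j) (set (fst (?ch n))) (snd (?ch n))"
    using in_H_hdl[OF inv rcn tc rB] by blast
  have sub: "\<And>n. set (fst (?ch n)) \<subseteq> ?H" by (rule chain_in_H)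
  have wit: "\<And>n L x g c. snd (?ch n) (L, All x g) = Some c \<Longrightarrow> c \<in> B \<and> (L, subst x (Cst c) g) \<in> ?H"
    using chain_ok[OF inv rcn tc rB] sub unfolding Inv_def by blast
  have kB: "\<And>k. k \<in> B \<Longrightarrow> \<exists>j. k = cn j" using rcn by auto
  have p1: "\<forall>L f. (L, f) \<in> ?H \<longrightarrow> palts L f \<noteq> [] \<longrightarrow> (\<exists>A\<in>set (palts L f). A \<subseteq> ?H)"
  proof (intro allI impI)
    fix L f assume m: "(L, f) \<in> ?H" and ne: "palts L f \<noteq> []"
    obtain n where "hdl L f (cn 0) (set (fst (?ch n))) (snd (?ch n))" using hd[OF m] by blast
    then obtain A where "A \<in> set (palts L f)" "A \<subseteq> set (fst (?ch n))" using ne unfolding hdl_def by blast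
    then show "\<exists>A\<in>set (palts L f). A \<subseteq> ?H" using sub by blast
  qed
  have p2: "\<forall>x g. (TT, All x g) \<in> ?H \<longrightarrow> (\<forall>k\<in>B. (TT, subst x (Cst k) g) \<in> ?H)"
  proof (intro allI impI ballI)
    fix x g k assume m: "(TT, All x g) \<in> ?H" and k: "k \<in> B"
    obtain j where j: "k = cn j" using kB[OF k] by blast
    obtain n where "hdl TT (All x g) (cn j) (set (fst (?ch n))) (snd (?ch n))" using hd[OF m] by blast
    then have "(TT, subst x (Cst k) g) \<in> set (fst (?ch n))" unfolding hdl_def j by simp
    then show "(TT, subst x (Cst k) g) \<in> ?H" using sub by blast
  qed
  have p3: "\<forall>x g. (FF, All x g) \<in> ?H \<longrightarrow> (\<exists>k\<in>B. (FF, subst x (Cst k) g) \<in> ?H)"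
  proof (intro allI impI)
    fix x g assume m: "(FF, All x g) \<in> ?H"
    obtain n where "hdl FF (All x g) (cn 0) (set (fst (?ch n))) (snd (?ch n))" using hd[OF m] by blast
    then obtain c where "snd (?ch n) (FF, All x g) = Some c" unfolding hdl_def by auto
    then show "\<exists>k\<in>B. (FF, subst x (Cst k) g) \<in> ?H" using wit by blast
  qed
  have p4: "\<forall>x g. (Tt, All x g) \<in> ?H \<longrightarrow> (\<exists>c\<in>B. (Tt, subst x (Cst c) g) \<in> ?H \<and>
      (\<forall>k\<in>B. k \<noteq> c \<longrightarrow> (Tt, subst x (Cst k) g) \<in> ?H \<or> (TT, subst x (Cst k) g) \<in> ?H))"
  proof (intro allI impI)
    fix x g assume m: "(Tt, All x g) \<in> ?H"
    obtain n0 where "hdl Tt (All x g) (cn 0) (set (fst (?ch n0))) (snd (?ch n0))" using hd[OF m] by blast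
    then obtain c where c: "snd (?ch n0) (Tt, All x g) = Some c" unfolding hdl_def by auto
    have cw: "c \<in> B \<and> (Tt, subst x (Cst c) g) \<in> ?H" using wit[OF c] .
    have "\<forall>k\<in>B. k \<noteq> c \<longrightarrow> (Tt, subst x (Cst k) g) \<in> ?H \<or> (TT, subst x (Cst k) g) \<in> ?H"
    proof (intro ballI impI)
      fix k assume k: "k \<in> B" "k \<noteq> c"
      obtain j where j: "k = cn j" using kB[OF k(1)] by blast
      obtain n where n: "n \<ge> n0" "hdl Tt (All x g) (cn j) (set (fst (?ch n))) (snd (?ch n))"
        using hd[OF m] by blast
      have "snd (?ch n) (Tt, All x g) = Some c"
        using extd_W[OF chain_mono[OF inv rcn tc rB n(1)] c] .
      then have "(Tt, subst x (Cst k) g) \<in> set (fst (?ch n)) \<or> (TT, subst x (Cst k) g) \<in> set (fst (?ch n))"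
        using n(2) k(2) unfolding hdl_def j by auto
      then show "(Tt, subst x (Cst k) g) \<in> ?H \<or> (TT, subst x (Cst k) g) \<in> ?H" using sub by blast
    qed
    then show "\<exists>c\<in>B. (Tt, subst x (Cst c) g) \<in> ?H \<and>
      (\<forall>k\<in>B. k \<noteq> c \<longrightarrow> (Tt, subst x (Cst k) g) \<in> ?H \<or> (TT, subst x (Cst k) g) \<in> ?H)" using cw by blast
  qed
  have p5: "\<forall>x g. (Ff, All x g) \<in> ?H \<longrightarrow> (\<exists>c\<in>B. (Ff, subst x (Cst c) g) \<in> ?H \<and>
      (\<forall>k\<in>B. k \<noteq> c \<longrightarrow> (Ff, subst x (Cst k) g) \<in> ?H \<or> (TT, subst x (Cst k) g) \<in> ?H
          \<or> (Tt, subst x (Cst k) g) \<in> ?H))"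
  proof (intro allI impI)
    fix x g assume m: "(Ff, All x g) \<in> ?H"
    obtain n0 where "hdl Ff (All x g) (cn 0) (set (fst (?ch n0))) (snd (?ch n0))" using hd[OF m] by blast
    then obtain c where c: "snd (?ch n0) (Ff, All x g) = Some c" unfolding hdl_def by auto
    have cw: "c \<in> B \<and> (Ff, subst x (Cst c) g) \<in> ?H" using wit[OF c] .
    have "\<forall>k\<in>B. k \<noteq> c \<longrightarrow> (Ff, subst x (Cst k) g) \<in> ?H \<or> (TT, subst x (Cst k) g) \<in> ?H
          \<or> (Tt, subst x (Cst k) g) \<in> ?H"
    proof (intro ballI impI)
      fix k assume k: "k \<in> B" "k \<noteq> c"
      obtain j where j: "k = cn j" using kB[OF k(1)] by blast
      obtain n where n: "n \<ge> n0" "hdl Ff (All x g) (cn j) (set (fst (?ch n))) (snd (?ch n))"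
        using hd[OF m] by blast
      have "snd (?ch n) (Ff, All x g) = Some c"
        using extd_W[OF chain_mono[OF inv rcn tc rB n(1)] c] .
      then have "(Ff, subst x (Cst k) g) \<in> set (fst (?ch n)) \<or> (TT, subst x (Cst k) g) \<in> set (fst (?ch n))
          \<or> (Tt, subst x (Cst k) g) \<in> set (fst (?ch n))"
        using n(2) k(2) unfolding hdl_def j by auto
      then show "(Ff, subst x (Cst k) g) \<in> ?H \<or> (TT, subst x (Cst k) g) \<in> ?H
          \<or> (Tt, subst x (Cst k) g) \<in> ?H" using sub by blast
    qed
    then show "\<exists>c\<in>B. (Ff, subst x (Cst c) g) \<in> ?H \<and>
      (\<forall>k\<in>B. k \<noteq> c \<longrightarrow> (Ff, subst x (Cst k) g) \<in> ?H \<or> (TT, subst x (Cst k) g) \<in> ?H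
          \<or> (Tt, subst x (Cst k) g) \<in> ?H)" using cw by blast
  qed
  show ?thesis unfolding sat_def using p1 p2 p3 p4 p5 by blast
qed

primrec mapc :: "('a \<Rightarrow> 'b) \<Rightarrow> ('p, 'a) fm \<Rightarrow> ('p, 'b) fm" where
  "mapc h (Atom p ts) = Atom p (map (map_tm h) ts)"
| "mapc h (Neg f) = Neg (mapc h f)"
| "mapc h (Box f) = Box (mapc h f)"
| "mapc h (All x f) = All x (mapc h f)"
| "mapc h (Imp f g) = Imp (mapc h f) (mapc h g)"

lemma mapc_eq: "mapc h f = map_fm id h f"
  by (induction f) auto

lemma map_tm_Var_iff: "map_tm h t = Var x \<longleftrightarrow> t = Var x"
  by (cases t) auto

lemma var_in_map: "Var x \<in> set (map (map_tm h) ts) \<longleftrightarrow> Var x \<in> set ts"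
proof
  assume "Var x \<in> set (map (map_tm h) ts)"
  then obtain t where "t \<in> set ts" "map_tm h t = Var x" by auto
  then show "Var x \<in> set ts" using map_tm_Var_iff by metis
next
  assume "Var x \<in> set ts"
  then have "map_tm h (Var x) \<in> set (map (map_tm h) ts)" by (metis image_eqI set_map)
  then show "Var x \<in> set (map (map_tm h) ts)" by simp
qed

lemma var_in_map': "Var x \<in> map_tm h ` set ts \<longleftrightarrow> Var x \<in> set ts"
  using var_in_map by (metis set_map)

lemma fv_map: "fv (mapc h f) = fv f"
  by (induction f) (auto simp: var_in_map')

lemma free_for_map: "free_for y x (mapc h f) = free_for y x f"
  by (induction f) (auto simp: fv_map)

lemma map_inst: "mapc h (inst s f) = inst (map_tm h \<circ> s) (mapc h f)"
proof (induction f arbitrary: s)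
  case (Atom p ts)
  have "\<forall>t\<in>set ts. map_tm h (tsub s t) = tsub (\<lambda>a. map_tm h (s a)) (map_tm h t)"
  proof
    fix t show "map_tm h (tsub s t) = tsub (\<lambda>a. map_tm h (s a)) (map_tm h t)" by (cases t) auto
  qed
  then show ?case by simp
next
  case (All x f)
  have e: "(\<lambda>a. map_tm h (if a = x then Var x else s a)) = (\<lambda>a. map_tm h (s a))(x := Var x)"
    by (rule ext) simp
  show ?case using All.IH by (simp add: e)
qed auto

lemma map_subst: "mapc h (subst x (Cst k) f) = subst x (Cst (h k)) (mapc h f)"
proof -
  have "map_tm h \<circ> Var(x := Cst k) = Var(x := Cst (h k))" by (rule ext) simp
  then show ?thesis unfolding subst_def using map_inst by metis
qed

lemma map_substV: "mapc h (subst x (Var y) f) = subst x (Var y) (mapc h f)"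
proof -
  have "map_tm h \<circ> Var(x := Var y) = Var(x := Var y)" by (rule ext) simp
  then show ?thesis unfolding subst_def using map_inst by metis
qed

lemma variant_map: "variant f g \<Longrightarrow> variant (mapc h f) (mapc h g)"
proof (induction rule: variant.induct)
  case (v_refl f)
  show ?case by (rule variant.v_refl)
next
  case (v_sym f g)
  show ?case by (rule variant.v_sym[OF v_sym.IH])
next
  case (v_trans f g h)
  show ?case by (rule variant.v_trans[OF v_trans.IH])
next
  case (v_Neg f g)
  then show ?case by (simp add: variant.v_Neg)
next
  case (v_Box f g)
  then show ?case by (simp add: variant.v_Box)
next
  case (v_All f g x)
  then show ?case by (simp add: variant.v_All)
next
  case (v_Imp f g f' g')
  then show ?case by (simp add: variant.v_Imp)
next
  case (v_void x f)
  then show ?case using variant.v_void[of x "mapc h f"] by (simp add: fv_map)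
next
  case (v_rename y x f)
  then show ?case using variant.v_rename[of y x "mapc h f"] by (simp add: fv_map free_for_map map_substV)
qed

lemma map_cong_consts: "(\<forall>k\<in>const_set f. h k = h' k) \<Longrightarrow> mapc h f = mapc h' f"
proof (induction f)
  case (Atom p ts)
  have "\<forall>t\<in>set ts. map_tm h t = map_tm h' t"
  proof
    fix t assume "t \<in> set ts" then show "map_tm h t = map_tm h' t" using Atom by (cases t rule: tm.exhaust) auto
  qed
  then show ?case by simp
qed auto

lemma fv_foldr: "fv (foldr Imp gs \<phi>) = (\<Union>g\<in>set gs. fv g) \<union> fv \<phi>"
  by (induction gs) auto

lemma cs_foldr: "const_set (foldr Imp gs \<phi>) = (\<Union>g\<in>set gs. const_set g) \<union> const_set \<phi>"
  by (induction gs) auto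

lemma map_foldr: "mapc h (foldr Imp gs \<phi>) = foldr Imp (map (mapc h) gs) (mapc h \<phi>)"
  by (induction gs) auto

lemma val_foldr: "val H B e (foldr Imp hs \<psi>) \<in> {FF, Ff} \<Longrightarrow>
    (\<forall>\<gamma>\<in>set hs. val H B e \<gamma> \<in> {TT, Tt}) \<and> val H B e \<psi> \<in> {FF, Ff}"
proof (induction hs)
  case (Cons \<gamma> hs)
  have i: "val H B e (Imp \<gamma> (foldr Imp hs \<psi>)) \<in> impT (val H B e \<gamma>) (val H B e (foldr Imp hs \<psi>))"
    by (rule val_Imp_in)
  have "val H B e \<gamma> \<in> {TT, Tt} \<and> val H B e (foldr Imp hs \<psi>) \<in> {FF, Ff}"
    using i Cons.prems by (cases "val H B e \<gamma>"; cases "val H B e (foldr Imp hs \<psi>)") auto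
  then show ?case using Cons.IH by auto
qed simp

lemma sen_atom_cst: "fv (Atom p ts) = {} \<Longrightarrow> t \<in> set ts \<Longrightarrow> \<exists>k. t = Cst k"
  by (cases t) auto

lemma mapc_comp: "mapc h (mapc g f) = mapc (h \<circ> g) f"
  by (induction f) (auto simp: tm.map_comp comp_def)

lemma countermodel:
  fixes ar :: "'p \<Rightarrow> nat" and C :: "'c set" and gs :: "('p, 'c) fm list" and \<phi> :: "('p, 'c) fm"
  assumes sg: "\<forall>\<gamma>\<in>set gs. sentence ar C \<gamma>" and sp: "sentence ar C \<phi>"
    and L0: "L0 \<in> {FF, Ff}"
    and nc: "\<not> closable C {(L0, map_fm id Inl (foldr Imp gs \<phi>))} (\<lambda>_. None)"
  shows "\<not> tm_conseq ar C (set gs) \<phi>"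
proof
  assume tc: "tm_conseq ar C (set gs) \<phi>"
  define root where "root = foldr Imp gs \<phi>"
  define C0 where "C0 = const_set root"
  have C0C: "C0 \<subseteq> C" using sg sp unfolding C0_def root_def cs_foldr sentence_def wff_def by auto
  have fC0: "finite C0" unfolding C0_def by (rule finite_const_set)
  have fvroot: "fv root = {}" using sg sp unfolding root_def fv_foldr sentence_def by auto
  define B :: "('c + nat) set" where "B = Inl ` C0 \<union> range Inr"
  have cB: "countable B" unfolding B_def using fC0 by (simp add: countable_finite)
  have Bne: "B \<noteq> {}" unfolding B_def by blast
  define cn where "cn = from_nat_into B"
  have rcn: "range cn = B" unfolding cn_def using cB Bne by simp
  have tcB: "\<forall>k\<in>B. tconst C k" unfolding B_def using C0C by auto
  have rB: "range Inr \<subseteq> B" unfolding B_def by blast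
  define R :: "('p, 'c + nat) fm" where "R = mapc Inl root"
  have nc': "\<not> closable C {(L0, R)} (\<lambda>_. None)" using nc unfolding R_def root_def mapc_eq .
  define st0 :: "('p, 'c) st" where "st0 = ([(L0, R)], \<lambda>_. None)"
  have inv0: "Inv C B st0" unfolding Inv_def st0_def using nc' by simp
  define H where "H = Hs C B cn st0"
  have o: "opn H" unfolding H_def by (rule H_opn[OF inv0 rcn tcB rB])
  have s: "sat H B" unfolding H_def by (rule H_sat[OF inv0 rcn tcB rB])
  have RH: "(L0, R) \<in> H" using chain_in_H[of C B cn st0 0] unfolding H_def st0_def by simp
  define e0 :: "nat \<Rightarrow> 'c + nat" where "e0 = (\<lambda>_. Inr 0)"
  have fvR: "fv R = {}" unfolding R_def fv_map using fvroot .
  have VR: "val H B e0 R = L0" using truth[OF o s Bne] RH inst_closed[OF fvR] by metis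
  have Rf: "R = foldr Imp (map (mapc Inl) gs) (mapc Inl \<phi>)" unfolding R_def root_def by (rule map_foldr)
  have vals: "(\<forall>\<gamma>\<in>set gs. val H B e0 (mapc Inl \<gamma>) \<in> {TT, Tt}) \<and> val H B e0 (mapc Inl \<phi>) \<in> {FF, Ff}"
    using val_foldr[of H B e0 "map (mapc Inl) gs" "mapc Inl \<phi>"] VR L0 unfolding Rf by auto
  define U :: "('c + nat) set" where "U = Inl ` C \<union> range Inr"
  define \<rho>' :: "'c + nat \<Rightarrow> 'c + nat" where
    "\<rho>' u = (case u of Inl c \<Rightarrow> if c \<in> C0 then Inl c else Inr 0 | Inr n \<Rightarrow> Inr n)" for u
  define \<rho> :: "'c + ('c + nat) \<Rightarrow> 'c + nat" where "\<rho> k = \<rho>' (interpU Inl k)" for k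
  define PI where "PI p us = val H B e0 (Atom p (map (\<lambda>u. Cst (\<rho>' u)) us))" for p us
  define v where "v \<psi> = val H B e0 (mapc \<rho> \<psi>)" for \<psi>
  define K where "K = constsU C U Inl"
  have K: "K = Inl ` C \<union> Inr ` range Inr"
  proof -
    have "U - Inl ` C = range Inr" unfolding U_def by auto
    then show ?thesis unfolding K_def constsU_def by simp
  qed
  have rK: "\<rho> ` K = B"
  proof
    show "\<rho> ` K \<subseteq> B" unfolding K B_def \<rho>_def \<rho>'_def by auto
    show "B \<subseteq> \<rho> ` K"
    proof
      fix b assume "b \<in> B"
      then consider c where "c \<in> C0" "b = Inl c" | n where "b = Inr n" unfolding B_def by blast
      then show "b \<in> \<rho> ` K"
      proof cases
        case 1
        then have "\<rho> (Inl c) = b" unfolding \<rho>_def \<rho>'_def by simp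
        moreover have "Inl c \<in> K" unfolding K using 1 C0C by auto
        ultimately show ?thesis by blast
      next
        case 2
        then have "\<rho> (Inr (Inr n)) = b" unfolding \<rho>_def \<rho>'_def by simp
        moreover have "Inr (Inr n) \<in> K" unfolding K by auto
        ultimately show ?thesis by blast
      qed
    qed
  qed
  have struct: "is_structure C U Inl" unfolding is_structure_def U_def by auto
  have isv: "is_valuation ar C U PI Inl v"
    unfolding is_valuation_def Let_def K_def[symmetric]
  proof (intro conjI allI impI)
    fix p ts assume sen: "sentence ar K (Atom p ts)"
    then have fva: "fv (Atom p ts) = {}" unfolding sentence_def by blast
    have eqm: "map (map_tm \<rho>) ts = map (\<lambda>u. Cst (\<rho>' u)) (map (eval_tm Inl) ts)"
    proof -
      have "\<forall>t\<in>set ts. map_tm \<rho> t = Cst (\<rho>' (eval_tm Inl t))"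
      proof
        fix t assume "t \<in> set ts"
        then obtain k where "t = Cst k" using sen_atom_cst[OF fva] by blast
        then show "map_tm \<rho> t = Cst (\<rho>' (eval_tm Inl t))" unfolding \<rho>_def by simp
      qed
      then show ?thesis by simp
    qed
    show "v (Atom p ts) = PI p (map (eval_tm Inl) ts)" unfolding v_def PI_def mapc.simps eqm ..
  next
    fix f show "v (Neg f) \<in> negT (v f)" unfolding v_def by (simp add: nt_in)
  next
    fix f show "v (Box f) \<in> boxT (v f)" unfolding v_def mapc.simps by (rule val_Box_in)
  next
    fix f g show "v (Imp f g) \<in> impT (v f) (v g)" unfolding v_def mapc.simps by (rule val_Imp_in)
  next
    fix x f
    have "{v (subst x (Cst k) f) |k. k \<in> K} = (\<lambda>k. v (subst x (Cst k) f)) ` K" by blast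
    also have "\<dots> = (\<lambda>k. val H B e0 (subst x (Cst (\<rho> k)) (mapc \<rho> f))) ` K"
      unfolding v_def map_subst by simp
    also have "\<dots> = (\<lambda>k'. val H B e0 (subst x (Cst k') (mapc \<rho> f))) ` (\<rho> ` K)"
      by (simp add: image_image)
    also have "\<dots> = (\<lambda>k'. val H B e0 (subst x (Cst k') (mapc \<rho> f))) ` B" using rK by simp
    finally have eq: "{v (subst x (Cst k) f) |k. k \<in> K} = (\<lambda>k'. val H B e0 (subst x (Cst k') (mapc \<rho> f))) ` B" .
    have "v (All x f) = minT ((\<lambda>k'. val H B e0 (subst x (Cst k') (mapc \<rho> f))) ` B)"
      unfolding v_def by (simp only: mapc.simps val_All_subst)
    then show "v (All x f) \<in> forallT {v (subst x (Cst k) f) |k. k \<in> K}"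
      unfolding eq using minT_in Bne by simp
  next
    fix f g assume "sentence ar K f \<and> sentence ar K g \<and> variant f g"
    then have "variant (mapc \<rho> f) (mapc \<rho> g)" using variant_map by blast
    then show "v f = v g" unfolding v_def using val_variant[OF Bne] by blast
  qed
  have vmap: "\<And>\<gamma>. const_set \<gamma> \<subseteq> C0 \<Longrightarrow> v (mapc Inl \<gamma>) = val H B e0 (mapc Inl \<gamma>)"
  proof -
    fix \<gamma> :: "('p, 'c) fm" assume cs: "const_set \<gamma> \<subseteq> C0"
    have "mapc \<rho> (mapc Inl \<gamma>) = mapc (\<rho> \<circ> Inl) \<gamma>" by (rule mapc_comp)
    also have "\<dots> = mapc Inl \<gamma>" using cs by (intro map_cong_consts) (auto simp: \<rho>_def \<rho>'_def)
    finally show "v (mapc Inl \<gamma>) = val H B e0 (mapc Inl \<gamma>)" unfolding v_def by simp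
  qed
  have prem: "\<forall>\<gamma>\<in>set gs. \<forall>s. (\<forall>x. s x \<in> K) \<longrightarrow> v (inst (Cst \<circ> s) (map_fm id Inl \<gamma>)) \<in> designated"
  proof (intro ballI allI impI)
    fix \<gamma> s assume g: "\<gamma> \<in> set gs"
    have fg: "fv (mapc Inl \<gamma>) = {}" using sg g unfolding fv_map sentence_def by blast
    have cg: "const_set \<gamma> \<subseteq> C0" using g unfolding C0_def root_def cs_foldr by auto
    show "v (inst (Cst \<circ> s) (map_fm id Inl \<gamma>)) \<in> designated"
      unfolding mapc_eq[symmetric] inst_closed[OF fg] vmap[OF cg] designated_def using vals g by blast
  qed
  have conc: "\<forall>s. (\<forall>x. s x \<in> K) \<longrightarrow> v (inst (Cst \<circ> s) (map_fm id Inl \<phi>)) \<in> designated"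
    using tc prem struct isv unfolding tm_conseq_def sem_conseq_in_def K_def by blast
  have sK: "Inr (Inr 0) \<in> K" unfolding K by auto
  have fp: "fv (mapc Inl \<phi>) = {}" using sp unfolding fv_map sentence_def by blast
  have cp: "const_set \<phi> \<subseteq> C0" unfolding C0_def root_def cs_foldr by auto
  have "v (inst (Cst \<circ> (\<lambda>_. Inr (Inr 0))) (map_fm id Inl \<phi>)) \<in> designated"
    using conc[rule_format, of "\<lambda>_. Inr (Inr 0)"] sK by simp
  then have "v (mapc Inl \<phi>) \<in> designated" unfolding mapc_eq[symmetric] inst_closed[OF fp] .
  then show False using vmap[OF cp] vals unfolding designated_def by auto
qed

theorem mainTheorem4:
  fixes ar :: "'p \<Rightarrow> nat" and C :: "'c set"
    and gs :: "('p, 'c) fm list" and \<phi> :: "('p, 'c) fm"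
  assumes "\<forall>p. 1 \<le> ar p"
    and "distinct gs"
    and "\<forall>\<gamma>\<in>set gs. sentence ar C \<gamma>"
    and "sentence ar C \<phi>"
    and "tm_conseq ar C (set gs) \<phi>"
  shows "tab_conseq C gs \<phi>"
proof -
  have "\<forall>L\<in>{FF, Ff}. closable C {(L, map_fm id Inl (foldr Imp gs \<phi>))} (\<lambda>_. None)"
  proof
    fix L assume L: "L \<in> {FF, Ff}"
    show "closable C {(L, map_fm id Inl (foldr Imp gs \<phi>))} (\<lambda>_. None)"
    proof (rule ccontr)
      assume "\<not> closable C {(L, map_fm id Inl (foldr Imp gs \<phi>))} (\<lambda>_. None)"
      then have "\<not> tm_conseq ar C (set gs) \<phi>" using countermodel[OF assms(3) assms(4) L] by blast
      then show False using assms(5) by blast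
    qed
  qed
  then show ?thesis unfolding tab_conseq_def tab_provable_def .
qed

end
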